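(* With $\mathbb E[Q]$ and $\mathbb E[\overline Q]$ the stationary mean numbers of items of the FCFS matching models on, respectively, the graph with nodes $\{1,2,3,4\}$ and edges $\{1,3\},\{1,4\},\{2,3\},\{2,4\},\{3,4\}$, and the complete graph on $\{1,2,3,4\}$, both with arrival distribution $\alpha_1=\alpha_2=0.25-\delta$, $\alpha_3=0.5-\delta$, $\alpha_4=3\delta$ ($\delta\in(0,\tfrac16)$), we have $$\lim_{\delta\to0^+}\delta\big(\mathbb E[\overline Q]-\mathbb E[Q]\big)=0.041\overline{6}=\tfrac1{24}.$$
   Context: A matching model consists of a finite connected simple graph $\mathcal G=(\mathcal V,\xi)$ (the compatibility graph) and a probability distribution $\alpha$ on its nodes with all $\alpha_i>0$. Items of class $i$ arrive with probability proportional to $\alpha_i$. For $i\in\mathcal V$, $\mathcal E(i)$ is its neighbour set. The state is a word $w=w_1\cdots w_q$ of unmatched item classes in arrival order. Under FCFS, an arriving item of class $i$ is matched with the oldest item in the system whose class lies in $\mathcal E(i)$ (both leave), and if there is none, $i$ is appended to the word. Under the stability condition $|\alpha_{\mathcal I}|<|\alpha_{\mathcal E(\mathcal I)}|$ for every independent set $\mathcal I$ (where $|\alpha_V|=\sum_{i\in V}\alpha_i$, $\mathcal E(V)=\bigcup_{i\in V}\mathcal E(i)$) this Markov chain is positive recurrent; $\mathbb E[Q]$ denotes the stationary mean length of the word. *)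

theory Defs
  imports "HOL-Analysis.Analysis"
begin

text \<open>The state is a word (list) of unmatched classes in arrival order.\<close>

definition fcfs_step :: "('a \<Rightarrow> 'a \<Rightarrow> bool) \<Rightarrow> 'a list \<Rightarrow> 'a \<Rightarrow> 'a list" where
  "fcfs_step E w i = (case filter (E i) w of [] \<Rightarrow> w @ [i] | j # _ \<Rightarrow> remove1 j w)"

definition fcfs_kernel ::
  "('a \<Rightarrow> 'a \<Rightarrow> bool) \<Rightarrow> 'a set \<Rightarrow> ('a \<Rightarrow> real) \<Rightarrow> 'a list \<Rightarrow> 'a list \<Rightarrow> real" where
  "fcfs_kernel E V \<alpha> w w' = (\<Sum>i\<in>V. if fcfs_step E w i = w' then \<alpha> i else 0)"

definition fcfs_stationary ::
  "('a \<Rightarrow> 'a \<Rightarrow> bool) \<Rightarrow> 'a set \<Rightarrow> ('a \<Rightarrow> real) \<Rightarrow> ('a list \<Rightarrow> real) \<Rightarrow> bool" where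
  "fcfs_stationary E V \<alpha> \<pi> \<longleftrightarrow>
     (\<forall>w. 0 \<le> \<pi> w) \<and> (\<forall>w. w \<notin> lists V \<longrightarrow> \<pi> w = 0) \<and> (\<pi> has_sum 1) UNIV \<and>
     (\<forall>w'. ((\<lambda>w. \<pi> w * fcfs_kernel E V \<alpha> w w') has_sum \<pi> w') UNIV)"

text \<open>Stationary mean length E[Q] of the word (the stationary distribution is unique
under the stability condition).\<close>
definition fcfs_mean_length ::
  "('a \<Rightarrow> 'a \<Rightarrow> bool) \<Rightarrow> 'a set \<Rightarrow> ('a \<Rightarrow> real) \<Rightarrow> real" where
  "fcfs_mean_length E V \<alpha> =
     (let \<pi> = (THE \<pi>. fcfs_stationary E V \<alpha> \<pi>) in \<Sum>\<^sub>\<infinity>w. \<pi> w * real (length w))"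

definition V4 :: "nat set" where "V4 = {1,2,3,4}"

definition E_G :: "nat \<Rightarrow> nat \<Rightarrow> bool" where
  "E_G i j \<longleftrightarrow> {i, j} \<in> {{1,3},{1,4},{2,3},{2,4},{3,4}}"

definition E_K4 :: "nat \<Rightarrow> nat \<Rightarrow> bool" where
  "E_K4 i j \<longleftrightarrow> i \<in> V4 \<and> j \<in> V4 \<and> i \<noteq> j"

definition alpha_delta :: "real \<Rightarrow> nat \<Rightarrow> real" where
  "alpha_delta \<delta> i = (if i = 1 \<or> i = 2 then 1/4 - \<delta> else if i = 3 then 1/2 - \<delta>
                       else if i = 4 then 3 * \<delta> else 0)"

end

theory Submission
  imports Defs "HOL-Real_Asymp.Real_Asymp"
begin

definition indep :: "('a \<Rightarrow> 'a \<Rightarrow> bool) \<Rightarrow> 'a list \<Rightarrow> bool" where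
  "indep E w \<longleftrightarrow> (\<forall>x\<in>set w. \<forall>y\<in>set w. \<not> E x y)"

definition valid :: "('a \<Rightarrow> 'a \<Rightarrow> bool) \<Rightarrow> 'a set \<Rightarrow> 'a list \<Rightarrow> bool" where
  "valid E V w \<longleftrightarrow> set w \<subseteq> V \<and> indep E w"

lemma step_len:
  "length (fcfs_step E w i) = (if filter (E i) w = [] then Suc (length w) else length w - 1)"
proof (cases "filter (E i) w")
  case Nil thus ?thesis by (simp add: fcfs_step_def)
next
  case (Cons j r)
  hence "j \<in> set (filter (E i) w)" by simp
  hence "j \<in> set w" by simp
  thus ?thesis using Cons by (simp add: fcfs_step_def length_remove1)
qed

lemma step_set: "set (fcfs_step E w i) \<subseteq> insert i (set w)"
  unfolding fcfs_step_def
  by (auto split: list.splits dest: set_remove1_subset[THEN subsetD])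

lemma step_valid:
  assumes sym: "\<And>x y. E x y = E y x" and irr: "\<And>x. \<not> E x x"
    and "valid E V w" "i \<in> V"
  shows "valid E V (fcfs_step E w i)"
proof (cases "filter (E i) w")
  case Nil
  hence "\<forall>y\<in>set w. \<not> E i y" by (metis filter_empty_conv)
  thus ?thesis using assms Nil unfolding valid_def indep_def fcfs_step_def
    by auto
next
  case (Cons j r)
  have "set (remove1 j w) \<subseteq> set w" by (rule set_remove1_subset)
  thus ?thesis using assms Cons unfolding valid_def indep_def fcfs_step_def
    by (auto simp: subset_iff)
qed

lemma has_sum_sum_fin:
  fixes f :: "'i \<Rightarrow> 'x \<Rightarrow> real"
  assumes "finite I" "\<And>i. i \<in> I \<Longrightarrow> (f i has_sum s i) A"
  shows "((\<lambda>x. \<Sum>i\<in>I. f i x) has_sum (\<Sum>i\<in>I. s i)) A"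
  using assms
proof (induction I rule: finite_induct)
  case empty thus ?case by simp
next
  case (insert a F)
  thus ?case by (simp add: has_sum_add)
qed

lemma kernel_expand:
  "\<mu> w * fcfs_kernel E V \<alpha> w w' = (\<Sum>i\<in>V. \<alpha> i * (if fcfs_step E w i = w' then \<mu> w else 0))"
  unfolding fcfs_kernel_def sum_distrib_left by (intro sum.cong) auto

lemma inflow:
  fixes \<mu> :: "'a list \<Rightarrow> real"
  assumes fin: "finite V" and S: "S \<subseteq> lists V" and z: "\<And>w. w \<notin> S \<Longrightarrow> \<mu> w = 0"
  shows "((\<lambda>w. \<mu> w * fcfs_kernel E V \<alpha> w w') has_sum
           (\<Sum>i\<in>V. \<alpha> i * sum \<mu> {w\<in>S. fcfs_step E w i = w'})) UNIV"
proof -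
  have fP: "finite {w\<in>S. fcfs_step E w i = w'}" for i
  proof (rule finite_subset)
    show "{w\<in>S. fcfs_step E w i = w'} \<subseteq> {xs. set xs \<subseteq> V \<and> length xs \<le> Suc (length w')}"
      using S by (auto simp: step_len split: if_splits)
    show "finite {xs. set xs \<subseteq> V \<and> length xs \<le> Suc (length w')}"
      by (rule finite_lists_length_le[OF fin])
  qed
  have h: "((\<lambda>w. \<alpha> i * (if fcfs_step E w i = w' then \<mu> w else 0)) has_sum
            (\<alpha> i * sum \<mu> {w\<in>S. fcfs_step E w i = w'})) UNIV" for i
  proof -
    have "((\<lambda>w. (if fcfs_step E w i = w' then \<mu> w else 0)) has_sum
            (sum \<mu> {w\<in>S. fcfs_step E w i = w'})) UNIV"
    proof -
      have "(\<mu> has_sum (sum \<mu> {w\<in>S. fcfs_step E w i = w'})) {w\<in>S. fcfs_step E w i = w'}"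
        using fP by (rule has_sum_finite)
      thus ?thesis
        by (subst (asm) has_sum_cong_neutral[where T=UNIV and
              g="\<lambda>w. (if fcfs_step E w i = w' then \<mu> w else 0)"]) (auto simp: z)
    qed
    thus ?thesis by (rule has_sum_cmult_right)
  qed
  have "((\<lambda>w. \<Sum>i\<in>V. \<alpha> i * (if fcfs_step E w i = w' then \<mu> w else 0)) has_sum
           (\<Sum>i\<in>V. \<alpha> i * sum \<mu> {w\<in>S. fcfs_step E w i = w'})) UNIV"
    by (rule has_sum_sum_fin[OF fin]) (rule h)
  thus ?thesis by (simp only: kernel_expand)
qed

lemma stat_eq:
  fixes \<mu> :: "'a list \<Rightarrow> real"
  assumes "fcfs_stationary E V \<alpha> \<mu>" "finite V" "S \<subseteq> lists V" "\<And>w. w \<notin> S \<Longrightarrow> \<mu> w = 0"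
  shows "\<mu> w' = (\<Sum>i\<in>V. \<alpha> i * sum \<mu> {w\<in>S. fcfs_step E w i = w'})"
proof -
  have "((\<lambda>w. \<mu> w * fcfs_kernel E V \<alpha> w w') has_sum
           (\<Sum>i\<in>V. \<alpha> i * sum \<mu> {w\<in>S. fcfs_step E w i = w'})) UNIV"
    by (rule inflow) (use assms in auto)
  moreover have "((\<lambda>w. \<mu> w * fcfs_kernel E V \<alpha> w w') has_sum \<mu> w') UNIV"
    using assms(1) unfolding fcfs_stationary_def by blast
  ultimately show ?thesis using has_sum_unique by blast
qed

lemma stat_fin_le1:
  assumes "fcfs_stationary E V \<alpha> \<mu>" "finite F"
  shows "sum \<mu> F \<le> 1"
  using assms unfolding fcfs_stationary_def
  by (intro finite_sum_le_has_sum[where A=UNIV]) auto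

lemma stat_nonneg: "fcfs_stationary E V \<alpha> \<mu> \<Longrightarrow> 0 \<le> \<mu> w"
  unfolding fcfs_stationary_def by auto

lemma stat_zero: "fcfs_stationary E V \<alpha> \<mu> \<Longrightarrow> \<not> set w \<subseteq> V \<Longrightarrow> \<mu> w = 0"
  unfolding fcfs_stationary_def by (auto simp: in_lists_conv_set)

lemma nonneg_bounded_mult_zero:
  fixes m :: real
  assumes "0 \<le> m" "\<And>N::nat. of_nat N * m \<le> 1"
  shows "m = 0"
proof (rule ccontr)
  assume "m \<noteq> 0" hence "0 < m" using assms by simp
  then obtain N::nat where "1 < of_nat N * m" using ex_less_of_nat_mult by blast
  thus False using assms(2)[of N] by simp
qed

lemma invalid_zero:
  fixes \<mu> :: "'a list \<Rightarrow> real"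
  assumes stat: "fcfs_stationary E V \<alpha> \<mu>" and fin: "finite V"
    and sym: "\<And>x y. E x y = E y x" and irr: "\<And>x. \<not> E x x"
    and dom: "\<And>x y i. x \<in> V \<Longrightarrow> y \<in> V \<Longrightarrow> i \<in> V \<Longrightarrow> E x y \<Longrightarrow> E i x \<or> E i y"
    and apos: "\<And>i. i \<in> V \<Longrightarrow> 0 \<le> \<alpha> i" and asum: "sum \<alpha> V = 1"
  shows "\<not> valid E V w \<Longrightarrow> \<mu> w = 0"
proof -
  define I where "I n = {w. set w \<subseteq> V \<and> \<not> indep E w \<and> length w = n}" for n
  have finI: "finite (I n)" for n
    by (rule finite_subset[OF _ finite_lists_length_eq[OF fin, of n]]) (auto simp: I_def)
  define m where "m n = sum \<mu> (I n)" for n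
  have nn: "0 \<le> \<mu> w" for w using stat_nonneg[OF stat] .
  have eq: "\<mu> w' = (\<Sum>i\<in>V. \<alpha> i * sum \<mu> {w\<in>lists V. fcfs_step E w i = w'})" for w'
    by (rule stat_eq[OF stat fin]) (use stat_zero[OF stat] in \<open>auto simp: in_lists_conv_set\<close>)
  have sub: "{w\<in>lists V. fcfs_step E w i \<in> I n} \<subseteq> I (Suc n)" if "i \<in> V" for i n
  proof
    fix w assume w: "w \<in> {w\<in>lists V. fcfs_step E w i \<in> I n}"
    hence wV: "set w \<subseteq> V" by (auto simp: in_lists_conv_set)
    have ni: "\<not> indep E w"
    proof
      assume "indep E w"
      hence "valid E V (fcfs_step E w i)"
        by (intro step_valid) (use sym irr wV that in \<open>auto simp: valid_def\<close>)
      thus False using w by (auto simp: I_def valid_def)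
    qed
    then obtain x y where xy: "x \<in> set w" "y \<in> set w" "E x y" by (auto simp: indep_def)
    hence "E i x \<or> E i y" using dom[of x y i] wV that by auto
    hence "filter (E i) w \<noteq> []" using xy by (auto simp: filter_empty_conv)
    hence "length (fcfs_step E w i) = length w - 1" by (simp add: step_len)
    moreover have "w \<noteq> []" using xy by auto
    ultimately have "length w = Suc (length (fcfs_step E w i))" by (cases w) simp_all
    thus "w \<in> I (Suc n)" using w wV ni by (auto simp: I_def)
  qed
  have mono1: "m n \<le> m (Suc n)" for n
  proof -
    have "m n = (\<Sum>w'\<in>I n. \<Sum>i\<in>V. \<alpha> i * sum \<mu> {w\<in>lists V. fcfs_step E w i = w'})"
      unfolding m_def by (rule sum.cong[OF refl], rule eq)
    also have "\<dots> = (\<Sum>i\<in>V. \<alpha> i * (\<Sum>w'\<in>I n. sum \<mu> {w\<in>lists V. fcfs_step E w i = w'}))"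
      by (subst sum.swap) (simp add: sum_distrib_left)
    also have "\<dots> = (\<Sum>i\<in>V. \<alpha> i * sum \<mu> {w\<in>lists V. fcfs_step E w i \<in> I n})"
    proof (rule sum.cong[OF refl])
      fix i assume i: "i \<in> V"
      let ?S = "{w\<in>lists V. fcfs_step E w i \<in> I n}"
      have fS: "finite ?S" using sub[OF i] finI finite_subset by blast
      have "(\<Sum>w'\<in>I n. sum \<mu> {w\<in>lists V. fcfs_step E w i = w'}) =
            (\<Sum>w'\<in>I n. sum \<mu> {w. w \<in> ?S \<and> fcfs_step E w i = w'})"
        by (rule sum.cong[OF refl]) (rule sum.cong, auto)
      also have "\<dots> = sum \<mu> ?S"
        by (rule sum.group[OF fS finI]) auto
      finally show "\<alpha> i * (\<Sum>w'\<in>I n. sum \<mu> {w\<in>lists V. fcfs_step E w i = w'}) = \<alpha> i * sum \<mu> ?S"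
        by simp
    qed
    also have "\<dots> \<le> (\<Sum>i\<in>V. \<alpha> i * m (Suc n))"
    proof (intro sum_mono mult_left_mono)
      fix i assume i: "i \<in> V"
      show "sum \<mu> {w\<in>lists V. fcfs_step E w i \<in> I n} \<le> m (Suc n)"
        unfolding m_def using sub[OF i] finI nn by (intro sum_mono2) auto
      show "0 \<le> \<alpha> i" using apos i .
    qed
    also have "\<dots> = m (Suc n)" using asum by (simp add: sum_distrib_right[symmetric])
    finally show ?thesis .
  qed
  have monok: "m n \<le> m (n + k)" for n k
  proof (induction k)
    case 0 thus ?case by simp
  next
    case (Suc k) thus ?case using mono1[of "n+k"] by simp
  qed
  have mz: "m n = 0" for n
  proof (rule nonneg_bounded_mult_zero)
    show "0 \<le> m n" unfolding m_def using nn by (simp add: sum_nonneg)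
    fix N :: nat
    have "of_nat N * m n = (\<Sum>k<N. m n)" by simp
    also have "\<dots> \<le> (\<Sum>k<N. m (n + k))" by (intro sum_mono monok)
    also have "\<dots> = sum \<mu> (\<Union>k<N. I (n + k))"
    proof -
      have d: "\<forall>i\<in>{..<N}. \<forall>j\<in>{..<N}. i \<noteq> j \<longrightarrow> I (n+i) \<inter> I (n+j) = {}"
        by (auto simp: I_def)
      show ?thesis unfolding m_def
        by (rule sum.UNION_disjoint[OF _ _ d, symmetric]) (simp_all add: finI)
    qed
    also have "\<dots> \<le> 1" by (rule stat_fin_le1[OF stat]) (auto simp: finI)
    finally show "of_nat N * m n \<le> 1" .
  qed
  assume nv: "\<not> valid E V w"
  show "\<mu> w = 0"
  proof (cases "set w \<subseteq> V")
    case False thus ?thesis using stat_zero[OF stat] by blast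
  next
    case True
    hence "w \<in> I (length w)" using nv by (auto simp: I_def valid_def)
    moreover have "sum \<mu> (I (length w)) = 0" using mz m_def by simp
    ultimately show ?thesis using sum_nonneg_eq_0_iff[OF finI] nn by blast
  qed
qed


lemma has_sum_by_length:
  fixes f :: "'a list \<Rightarrow> real"
  assumes fin: "finite V" and nn: "\<And>w. 0 \<le> f w" and z: "\<And>w. \<not> set w \<subseteq> V \<Longrightarrow> f w = 0"
    and s: "((\<lambda>n. sum f {w. set w \<subseteq> V \<and> length w = n}) has_sum s) UNIV"
  shows "(f has_sum s) UNIV"
proof -
  define L where "L n = {w. set w \<subseteq> V \<and> length w = n}" for n
  define T where "T = Sigma (UNIV::nat set) L"
  have finL: "finite (L n)" for n unfolding L_def by (rule finite_lists_length_eq[OF fin])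
  have inj: "inj_on snd T" unfolding T_def L_def inj_on_def by auto
  have img: "snd ` T = {w. set w \<subseteq> V}" unfolding T_def L_def by force
  have snn: "0 \<le> sum f (L n)" for n using nn by (simp add: sum_nonneg)
  have summ: "(f \<circ> snd) summable_on T"
  proof (rule nonneg_bdd_above_summable_on)
    show "\<And>x. x \<in> T \<Longrightarrow> 0 \<le> (f \<circ> snd) x" using nn by simp
    show "bdd_above (sum (f \<circ> snd) ` {F. F \<subseteq> T \<and> finite F})"
    proof (rule bdd_aboveI2)
      fix F assume F: "F \<in> {F. F \<subseteq> T \<and> finite F}"
      define N where "N = Max (insert 0 (fst ` F))"
      have FN: "F \<subseteq> Sigma {..N} L"
      proof
        fix x assume "x \<in> F"
        moreover hence "fst x \<le> N" unfolding N_def using F by (auto intro!: Max_ge)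
        ultimately show "x \<in> Sigma {..N} L" using F T_def by auto
      qed
      have "sum (f \<circ> snd) F \<le> sum (f \<circ> snd) (Sigma {..N} L)"
        using FN nn by (intro sum_mono2) (auto simp: finL)
      also have "\<dots> = (\<Sum>n\<le>N. sum f (L n))"
      proof -
        have "(\<Sum>n\<le>N. sum f (L n)) = (\<Sum>(n,w)\<in>Sigma {..N} L. f w)"
          using sum.Sigma[of "{..N}" L "\<lambda>n w. f w"] finL by simp
        also have "\<dots> = sum (f \<circ> snd) (Sigma {..N} L)"
          by (simp add: split_def o_def)
        finally show ?thesis by simp
      qed
      also have "\<dots> \<le> s"
        using s unfolding L_def[symmetric]
        by (intro finite_sum_le_has_sum[where A=UNIV]) (auto simp: snn)
      finally show "sum (f \<circ> snd) F \<le> s" .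
    qed
  qed
  then obtain t where t: "((f \<circ> snd) has_sum t) T" unfolding summable_on_def by blast
  have "((\<lambda>n. sum f (L n)) has_sum t) UNIV"
    by (rule has_sum_SigmaD[where f="f \<circ> snd" and B=L]) (use t T_def finL in auto)
  moreover have "((\<lambda>n. sum f (L n)) has_sum s) UNIV" using s by (simp add: L_def)
  ultimately have "t = s" by (rule has_sum_unique)
  hence "(f has_sum s) (snd ` T)" using t has_sum_reindex[OF inj, of f s] by simp
  hence "(f has_sum s) {w. set w \<subseteq> V}" using img by simp
  thus ?thesis by (subst (asm) has_sum_cong_neutral[where T=UNIV and g=f]) (auto simp: z)
qed

lemma chain_lemma:
  fixes s :: "nat \<Rightarrow> real"
  assumes nn: "\<And>m. 0 \<le> s m" and bd: "\<And>N. (\<Sum>k<N. s k) \<le> 1"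
    and ab: "a + b = 1" "0 \<le> a" "0 \<le> b"
    and rec: "\<And>m. s (Suc m) = a * s m + b * s (Suc (Suc m))"
  shows "b * s (Suc m) = a * s m"
proof -
  define D where "D m = b * s (Suc m) - a * s m" for m
  have DS: "D (Suc m) = D m" for m
  proof -
    have "b = 1 - a" using ab(1) by simp
    have "(a + b) * s (Suc m) = s (Suc m)" using ab(1) by simp
    hence h: "a * s (Suc m) + b * s (Suc m) = s (Suc m)" by (simp add: distrib_right)
    show ?thesis unfolding D_def using rec[of m] h by linarith
  qed
  have Dc: "D m = D 0" for m by (induction m) (simp_all add: DS)
  have "\<bar>D 0\<bar> = 0"
  proof (rule nonneg_bounded_mult_zero)
    show "0 \<le> \<bar>D 0\<bar>" by simp
    fix N :: nat
    have "(\<Sum>k<N. D k) = (\<Sum>k<N. D 0)" by (rule sum.cong[OF refl]) (rule Dc)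
    hence "of_nat N * D 0 = (\<Sum>k<N. D k)" by simp
    also have "\<dots> = b * (\<Sum>k<N. s (Suc k)) - a * (\<Sum>k<N. s k)"
      unfolding D_def by (simp add: sum_subtractf sum_distrib_left)
    finally have eq: "of_nat N * D 0 = b * (\<Sum>k<N. s (Suc k)) - a * (\<Sum>k<N. s k)" .
    have s1: "0 \<le> (\<Sum>k<N. s (Suc k))" "(\<Sum>k<N. s (Suc k)) \<le> 1"
    proof -
      show "0 \<le> (\<Sum>k<N. s (Suc k))" using nn by (simp add: sum_nonneg)
      have "(\<Sum>k<Suc N. s k) = s 0 + (\<Sum>k<N. s (Suc k))" by (rule sum.lessThan_Suc_shift)
      hence "(\<Sum>k<N. s (Suc k)) \<le> (\<Sum>k<Suc N. s k)" using nn[of 0] by linarith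
      thus "(\<Sum>k<N. s (Suc k)) \<le> 1" using bd[of "Suc N"] by simp
    qed
    have s2: "0 \<le> (\<Sum>k<N. s k)" "(\<Sum>k<N. s k) \<le> 1" using nn bd by (auto simp: sum_nonneg)
    have "b * (\<Sum>k<N. s (Suc k)) \<le> b" "a * (\<Sum>k<N. s k) \<le> a"
      using s1 s2 ab by (auto intro: mult_left_le)
    moreover have "0 \<le> b * (\<Sum>k<N. s (Suc k))" "0 \<le> a * (\<Sum>k<N. s k)"
      using s1 s2 ab by auto
    ultimately have "\<bar>of_nat N * D 0\<bar> \<le> 1" unfolding eq abs_le_iff using ab by linarith
    thus "of_nat N * \<bar>D 0\<bar> \<le> 1" by (simp add: abs_mult)
  qed
  thus ?thesis using Dc[of m] D_def by simp
qed

lemma geom_has_sum: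
  fixes r :: real assumes "0 \<le> r" "r < 1"
  shows "((\<lambda>n. r ^ n) has_sum (1 / (1 - r))) UNIV"
  using assms by (intro sums_nonneg_imp_has_sum geometric_sums) auto

lemma geom_len_has_sum:
  fixes r :: real assumes "0 \<le> r" "r < 1"
  shows "((\<lambda>n. real n * r ^ n) has_sum (r / (1 - r)^2)) UNIV"
proof (rule sums_nonneg_imp_has_sum)
  show "0 \<le> real n * r ^ n" for n using assms by simp
  have "(\<lambda>n. of_nat (Suc n) * r ^ n) sums (1 / (1 - r)^2)"
    using assms by (intro geometric_deriv_sums) auto
  hence "(\<lambda>n. r * (of_nat (Suc n) * r ^ n)) sums (r * (1 / (1 - r)^2))"
    by (rule sums_mult)
  hence "(\<lambda>n. real (Suc n) * r ^ Suc n) sums (r / (1 - r)^2)"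
    by (simp add: algebra_simps)
  hence "(\<lambda>n. (\<lambda>n. real n * r ^ n) (Suc n)) sums (r / (1 - r)^2)" by simp
  from sums_Suc_iff[THEN iffD1, OF this]
  show "(\<lambda>n. real n * r ^ n) sums (r / (1 - r)^2)" by simp
qed

lemma mean_from_product:
  fixes c :: "'a list \<Rightarrow> real"
  assumes uniq: "\<And>\<mu>. fcfs_stationary E V \<alpha> \<mu> \<Longrightarrow> \<mu> = (\<lambda>w. \<mu> [] * c w)"
    and ex: "fcfs_stationary E V \<alpha> (\<lambda>w. c w / Z)"
    and Z: "(c has_sum Z) UNIV" "Z \<noteq> 0"
    and M: "((\<lambda>w. c w * real (length w)) has_sum M) UNIV"
  shows "fcfs_mean_length E V \<alpha> = M / Z"
proof -
  have the: "(THE \<pi>. fcfs_stationary E V \<alpha> \<pi>) = (\<lambda>w. c w / Z)"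
  proof (rule the_equality)
    show "fcfs_stationary E V \<alpha> (\<lambda>w. c w / Z)" by (rule ex)
    fix \<mu> assume st: "fcfs_stationary E V \<alpha> \<mu>"
    hence mu: "\<mu> = (\<lambda>w. \<mu> [] * c w)" by (rule uniq)
    have "(\<mu> has_sum 1) UNIV" using st unfolding fcfs_stationary_def by blast
    hence "((\<lambda>w. \<mu> [] * c w) has_sum 1) UNIV" using mu by simp
    moreover have "((\<lambda>w. \<mu> [] * c w) has_sum (\<mu> [] * Z)) UNIV"
      by (rule has_sum_cmult_right[OF Z(1)])
    ultimately have "\<mu> [] * Z = 1" using has_sum_unique by blast
    hence "\<mu> [] = 1 / Z" using Z(2) by (simp add: field_simps)
    thus "\<mu> = (\<lambda>w. c w / Z)" using mu by (auto simp: fun_eq_iff)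
  qed
  have "((\<lambda>w. c w / Z * real (length w)) has_sum (M / Z)) UNIV"
    using has_sum_cmult_right[OF M, of "1/Z"] by (simp add: field_simps)
  hence "(\<Sum>\<^sub>\<infinity>w. c w / Z * real (length w)) = M / Z" by (rule infsumI)
  thus ?thesis unfolding fcfs_mean_length_def the by simp
qed


lemma K4_sym: "E_K4 x y = E_K4 y x" unfolding E_K4_def by auto
lemma K4_irr: "\<not> E_K4 x x" unfolding E_K4_def by auto
lemma K4_dom: "x \<in> V4 \<Longrightarrow> y \<in> V4 \<Longrightarrow> i \<in> V4 \<Longrightarrow> E_K4 x y \<Longrightarrow> E_K4 i x \<or> E_K4 i y"
  unfolding E_K4_def by auto

lemma K4_valid: "valid E_K4 V4 w \<longleftrightarrow> (w = [] \<or> (\<exists>x\<in>V4. \<exists>n. w = replicate (Suc n) x))"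
proof
  assume v: "valid E_K4 V4 w"
  show "w = [] \<or> (\<exists>x\<in>V4. \<exists>n. w = replicate (Suc n) x)"
  proof (cases w)
    case Nil thus ?thesis by simp
  next
    case (Cons a t)
    have "\<forall>y\<in>set w. y = a" using v Cons unfolding valid_def indep_def E_K4_def by auto
    hence "replicate (length w) a = w" by (rule replicate_length_same)
    moreover have "a \<in> V4" using v Cons unfolding valid_def by auto
    ultimately show ?thesis using Cons by (metis length_Cons)
  qed
next
  assume "w = [] \<or> (\<exists>x\<in>V4. \<exists>n. w = replicate (Suc n) x)"
  thus "valid E_K4 V4 w" unfolding valid_def indep_def E_K4_def by auto
qed

lemma K4_step_nil: "fcfs_step E_K4 [] i = [i]"
  by (simp add: fcfs_step_def)

lemma K4_step_rep:
  assumes "x \<in> V4" "i \<in> V4"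
  shows "fcfs_step E_K4 (replicate (Suc n) x) i =
           (if i = x then replicate (Suc (Suc n)) x else replicate n x)"
proof (cases "i = x")
  case True
  hence "filter (E_K4 i) (replicate (Suc n) x) = []" by (simp add: E_K4_def)
  thus ?thesis using True by (simp add: fcfs_step_def replicate_append_same)
next
  case False
  hence "filter (E_K4 i) (replicate (Suc n) x) = replicate (Suc n) x"
    using assms by (simp add: E_K4_def filter_replicate)
  thus ?thesis using False by (simp add: fcfs_step_def)
qed

lemma K4_pre_rep:
  assumes x: "x \<in> V4" and i: "i \<in> V4"
  shows "{w. valid E_K4 V4 w \<and> fcfs_step E_K4 w i = replicate (Suc m) x} =
         (if i = x then {replicate m x} else {replicate (Suc (Suc m)) x})"
proof (intro equalityI subsetI)
  fix w assume "w \<in> {w. valid E_K4 V4 w \<and> fcfs_step E_K4 w i = replicate (Suc m) x}"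
  hence v: "valid E_K4 V4 w" and st: "fcfs_step E_K4 w i = replicate (Suc m) x" by auto
  from v[unfolded K4_valid] show "w \<in> (if i = x then {replicate m x} else {replicate (Suc (Suc m)) x})"
  proof
    assume "w = []"
    thus ?thesis using st by (cases m) (auto simp: K4_step_nil)
  next
    assume "\<exists>y\<in>V4. \<exists>n. w = replicate (Suc n) y"
    then obtain y n where y: "y \<in> V4" and w: "w = replicate (Suc n) y" by blast
    show ?thesis
    proof (cases "i = y")
      case True
      thus ?thesis using st w K4_step_rep[OF y i, of n] by auto
    next
      case False
      hence e: "replicate n y = replicate (Suc m) x" using st w K4_step_rep[OF y i, of n] by auto
      have "n = Suc m \<and> y = x" using e by (metis replicate_eq_replicate Zero_not_Suc)
      thus ?thesis using False w by auto
    qed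
  qed
next
  fix w assume "w \<in> (if i = x then {replicate m x} else {replicate (Suc (Suc m)) x})"
  thus "w \<in> {w. valid E_K4 V4 w \<and> fcfs_step E_K4 w i = replicate (Suc m) x}"
  proof (cases "i = x")
    case True
    hence w: "w = replicate m x" using \<open>w \<in> _\<close> by simp
    show ?thesis
    proof (cases m)
      case 0 thus ?thesis using w True x by (simp add: K4_valid K4_step_nil)
    next
      case (Suc k)
      thus ?thesis using w True x K4_step_rep[OF x i, of k] K4_valid by auto
    qed
  next
    case False
    hence w: "w = replicate (Suc (Suc m)) x" using \<open>w \<in> _\<close> by simp
    have "fcfs_step E_K4 w i = replicate (Suc m) x"
      unfolding w using K4_step_rep[OF x i, of "Suc m"] False by simp
    moreover have "valid E_K4 V4 w" unfolding w K4_valid using x by blast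
    ultimately show ?thesis by simp
  qed
qed

lemma K4_pre_nil:
  assumes i: "i \<in> V4"
  shows "{w. valid E_K4 V4 w \<and> fcfs_step E_K4 w i = []} = (\<lambda>y. [y]) ` (V4 - {i})"
proof (intro equalityI subsetI)
  fix w assume "w \<in> {w. valid E_K4 V4 w \<and> fcfs_step E_K4 w i = []}"
  hence v: "valid E_K4 V4 w" and st: "fcfs_step E_K4 w i = []" by auto
  from v[unfolded K4_valid] show "w \<in> (\<lambda>y. [y]) ` (V4 - {i})"
  proof
    assume "w = []" thus ?thesis using st by (simp add: K4_step_nil)
  next
    assume "\<exists>y\<in>V4. \<exists>n. w = replicate (Suc n) y"
    then obtain y n where y: "y \<in> V4" and w: "w = replicate (Suc n) y" by blast
    have "i \<noteq> y \<and> n = 0" using st w K4_step_rep[OF y i, of n] by (auto split: if_splits)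
    thus ?thesis using w y by auto
  qed
next
  fix w assume "w \<in> (\<lambda>y. [y]) ` (V4 - {i})"
  then obtain y where "y \<in> V4" "y \<noteq> i" "w = [y]" by auto
  thus "w \<in> {w. valid E_K4 V4 w \<and> fcfs_step E_K4 w i = []}"
    using K4_step_rep[of y i 0] i by (auto simp: K4_valid)
qed

lemma pre_invalid:
  assumes sym: "\<And>x y. E x y = E y x" and irr: "\<And>x. \<not> E x x"
    and "i \<in> V" "\<not> valid E V w'"
  shows "{w. valid E V w \<and> fcfs_step E w i = w'} = {}"
  using step_valid[of E] assms by blast

lemma sum_if_eq:
  fixes \<alpha> :: "'a \<Rightarrow> real"
  assumes "finite V" "x \<in> V" "sum \<alpha> V = 1"
  shows "(\<Sum>i\<in>V. \<alpha> i * (if i = x then A else B)) = \<alpha> x * A + (1 - \<alpha> x) * B"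
proof -
  have "(\<Sum>i\<in>V. \<alpha> i * (if i = x then A else B)) = (\<Sum>i\<in>V. \<alpha> i * B + (if i = x then \<alpha> x * (A - B) else 0))"
    by (rule sum.cong) (auto simp: algebra_simps)
  also have "\<dots> = B * sum \<alpha> V + \<alpha> x * (A - B)"
    using assms by (simp add: sum.distrib sum_distrib_right[symmetric])
  finally show ?thesis using assms by (simp add: algebra_simps)
qed

lemma sum_minus_eq:
  fixes \<alpha> f :: "'a \<Rightarrow> real"
  assumes "finite V" "sum \<alpha> V = 1"
  shows "(\<Sum>i\<in>V. \<alpha> i * (\<Sum>y\<in>V - {i}. f y)) = (\<Sum>y\<in>V. f y * (1 - \<alpha> y))"
proof -
  have "(\<Sum>i\<in>V. \<alpha> i * (\<Sum>y\<in>V - {i}. f y)) = (\<Sum>i\<in>V. \<alpha> i * (sum f V - f i))"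
    using assms by (intro sum.cong refl) (simp add: sum_diff1)
  also have "\<dots> = (\<Sum>i\<in>V. \<alpha> i * sum f V) - (\<Sum>i\<in>V. \<alpha> i * f i)"
    by (simp add: right_diff_distrib sum_subtractf)
  also have "\<dots> = sum f V * sum \<alpha> V - (\<Sum>i\<in>V. \<alpha> i * f i)"
    by (simp add: sum_distrib_right[symmetric] mult.commute)
  also have "\<dots> = (\<Sum>y\<in>V. f y * (1 - \<alpha> y))"
    using assms by (simp add: algebra_simps sum_subtractf)
  finally show ?thesis .
qed

definition rK :: "(nat \<Rightarrow> real) \<Rightarrow> nat \<Rightarrow> real" where
  "rK \<alpha> x = \<alpha> x / (1 - \<alpha> x)"

definition cK :: "(nat \<Rightarrow> real) \<Rightarrow> nat list \<Rightarrow> real" where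
  "cK \<alpha> w = (if valid E_K4 V4 w then rK \<alpha> (hd w) ^ length w else 0)"

definition okK :: "(nat \<Rightarrow> real) \<Rightarrow> bool" where
  "okK \<alpha> \<longleftrightarrow> (\<forall>x\<in>V4. 0 < \<alpha> x \<and> \<alpha> x < 1/2) \<and> sum \<alpha> V4 = 1"

lemma finV4: "finite V4" by (simp add: V4_def)
lemma cardV4: "card V4 = 4" by (simp add: V4_def)

lemma rK_props:
  assumes "okK \<alpha>" "x \<in> V4"
  shows "0 \<le> rK \<alpha> x" "rK \<alpha> x < 1" "rK \<alpha> x * (1 - \<alpha> x) = \<alpha> x"
  using assms unfolding okK_def rK_def by (auto simp: field_simps)

lemma cK_rep: "x \<in> V4 \<Longrightarrow> cK \<alpha> (replicate n x) = rK \<alpha> x ^ n"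
  by (cases n) (auto simp: cK_def K4_valid)

lemma cK_nil: "cK \<alpha> [] = 1"
  by (simp add: cK_def K4_valid)

lemma cK_nonneg: "okK \<alpha> \<Longrightarrow> 0 \<le> cK \<alpha> w"
  unfolding cK_def using rK_props(1)
  by (auto simp: K4_valid)

definition BK :: "(nat \<Rightarrow> real) \<Rightarrow> (nat list \<Rightarrow> real) \<Rightarrow> nat list \<Rightarrow> real" where
  "BK \<alpha> \<mu> w' = (\<Sum>i\<in>V4. \<alpha> i * sum \<mu> {w \<in> {w. valid E_K4 V4 w}. fcfs_step E_K4 w i = w'})"

lemma BK_rep:
  assumes x: "x \<in> V4" and s: "sum \<alpha> V4 = 1"
  shows "BK \<alpha> \<mu> (replicate (Suc m) x) = \<alpha> x * \<mu> (replicate m x) + (1 - \<alpha> x) * \<mu> (replicate (Suc (Suc m)) x)"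
proof -
  have "BK \<alpha> \<mu> (replicate (Suc m) x) = (\<Sum>i\<in>V4. \<alpha> i * (if i = x then \<mu> (replicate m x) else \<mu> (replicate (Suc (Suc m)) x)))"
    unfolding BK_def
  proof (rule sum.cong[OF refl])
    fix i assume i: "i \<in> V4"
    have "{w \<in> {w. valid E_K4 V4 w}. fcfs_step E_K4 w i = replicate (Suc m) x} =
          (if i = x then {replicate m x} else {replicate (Suc (Suc m)) x})"
      using K4_pre_rep[OF x i, of m] by simp
    thus "\<alpha> i * sum \<mu> {w \<in> {w. valid E_K4 V4 w}. fcfs_step E_K4 w i = replicate (Suc m) x} =
          \<alpha> i * (if i = x then \<mu> (replicate m x) else \<mu> (replicate (Suc (Suc m)) x))"
      by (simp del: replicate_Suc)
  qed
  also have "\<dots> = \<alpha> x * \<mu> (replicate m x) + (1 - \<alpha> x) * \<mu> (replicate (Suc (Suc m)) x)"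
    by (rule sum_if_eq[OF finV4 x s])
  finally show ?thesis .
qed

lemma BK_nil:
  assumes s: "sum \<alpha> V4 = 1"
  shows "BK \<alpha> \<mu> [] = (\<Sum>y\<in>V4. \<mu> [y] * (1 - \<alpha> y))"
proof -
  have "BK \<alpha> \<mu> [] = (\<Sum>i\<in>V4. \<alpha> i * (\<Sum>y\<in>V4 - {i}. \<mu> [y]))"
    unfolding BK_def
  proof (rule sum.cong[OF refl])
    fix i assume i: "i \<in> V4"
    have "{w \<in> {w. valid E_K4 V4 w}. fcfs_step E_K4 w i = []} = (\<lambda>y. [y]) ` (V4 - {i})"
      using K4_pre_nil[OF i] by simp
    moreover have "inj_on (\<lambda>y. [y]) (V4 - {i})" by (auto simp: inj_on_def)
    ultimately show "\<alpha> i * sum \<mu> {w \<in> {w. valid E_K4 V4 w}. fcfs_step E_K4 w i = []} =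
          \<alpha> i * (\<Sum>y\<in>V4 - {i}. \<mu> [y])"
      by (simp add: sum.reindex)
  qed
  also have "\<dots> = (\<Sum>y\<in>V4. \<mu> [y] * (1 - \<alpha> y))"
    by (rule sum_minus_eq[OF finV4 s])
  finally show ?thesis .
qed

lemma BK_inv:
  assumes "\<not> valid E_K4 V4 w'"
  shows "BK \<alpha> \<mu> w' = 0"
proof -
  have e: "{w \<in> {w. valid E_K4 V4 w}. fcfs_step E_K4 w i = w'} = {}" if "i \<in> V4" for i
    using pre_invalid[of E_K4 i V4 w', OF K4_sym K4_irr that assms] by simp
  have "\<alpha> i * sum \<mu> {w \<in> {w. valid E_K4 V4 w}. fcfs_step E_K4 w i = w'} = 0" if "i \<in> V4" for i
    by (subst e[OF that]) simp
  thus ?thesis unfolding BK_def by (intro sum.neutral) blast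
qed

lemma K4_stat_BK:
  assumes "fcfs_stationary E_K4 V4 \<alpha> \<mu>" "\<And>w. \<not> valid E_K4 V4 w \<Longrightarrow> \<mu> w = 0"
  shows "\<mu> w' = BK \<alpha> \<mu> w'"
  unfolding BK_def
  by (rule stat_eq[OF assms(1) finV4]) (use assms(2) in \<open>auto simp: valid_def in_lists_conv_set\<close>)

lemma K4_has_BK:
  assumes "\<And>w. \<not> valid E_K4 V4 w \<Longrightarrow> \<mu> w = 0"
  shows "((\<lambda>w. \<mu> w * fcfs_kernel E_K4 V4 \<alpha> w w') has_sum BK \<alpha> \<mu> w') UNIV"
  unfolding BK_def
  by (rule inflow[OF finV4]) (use assms in \<open>auto simp: valid_def in_lists_conv_set\<close>)


lemma K4_exists:
  assumes ok: "okK \<alpha>" and Z: "(cK \<alpha> has_sum Z) UNIV" "0 < Z"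
  shows "fcfs_stationary E_K4 V4 \<alpha> (\<lambda>w. cK \<alpha> w / Z)"
  unfolding fcfs_stationary_def
proof (intro conjI allI impI)
  fix w show "0 \<le> cK \<alpha> w / Z" using cK_nonneg[OF ok] Z(2) by simp
next
  fix w assume "w \<notin> lists V4"
  hence "\<not> valid E_K4 V4 w" by (auto simp: valid_def in_lists_conv_set)
  thus "cK \<alpha> w / Z = 0" by (simp add: cK_def)
next
  show "((\<lambda>w. cK \<alpha> w / Z) has_sum 1) UNIV"
    using has_sum_cmult_left[OF Z(1), of "1/Z"] Z(2) by simp
next
  fix w'
  let ?\<pi> = "\<lambda>w. cK \<alpha> w / Z"
  have z: "\<And>w. \<not> valid E_K4 V4 w \<Longrightarrow> ?\<pi> w = 0" by (simp add: cK_def)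
  have s: "sum \<alpha> V4 = 1" using ok okK_def by blast
  have "BK \<alpha> ?\<pi> w' = ?\<pi> w'"
  proof (cases "valid E_K4 V4 w'")
    case False thus ?thesis using BK_inv z by simp
  next
    case True
    then consider "w' = []" | x m where "x \<in> V4" "w' = replicate (Suc m) x"
      unfolding K4_valid by blast
    thus ?thesis
    proof cases
      case 1
      have "BK \<alpha> ?\<pi> w' = (\<Sum>y\<in>V4. (rK \<alpha> y * (1 - \<alpha> y)) / Z)"
        unfolding 1 BK_nil[OF s]
        by (intro sum.cong refl) (simp add: cK_rep[of _ _ 1, simplified])
      also have "\<dots> = (\<Sum>y\<in>V4. \<alpha> y) / Z"
        by (simp add: rK_props(3)[OF ok] sum_divide_distrib)
      finally show ?thesis using s 1 by (simp add: cK_nil)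
    next
      case 2
      note x = 2(1)
      let ?r = "rK \<alpha> x"
      have e: "?r * (1 - \<alpha> x) = \<alpha> x" by (rule rK_props(3)[OF ok x])
      have "BK \<alpha> ?\<pi> w' = (\<alpha> x * ?r ^ m + (1 - \<alpha> x) * ?r ^ Suc (Suc m)) / Z"
        unfolding 2(2) BK_rep[OF x s] cK_rep[OF x] by (simp add: add_divide_distrib)
      also have "\<alpha> x * ?r ^ m + (1 - \<alpha> x) * ?r ^ Suc (Suc m) = ?r ^ Suc m"
      proof -
        have "\<alpha> x * ?r ^ m = (?r * (1 - \<alpha> x)) * ?r ^ m" using e by simp
        also have "\<dots> = (1 - \<alpha> x) * ?r ^ Suc m" by (simp add: algebra_simps)
        finally have h1: "\<alpha> x * ?r ^ m = (1 - \<alpha> x) * ?r ^ Suc m" .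
        have "(1 - \<alpha> x) * ?r ^ Suc (Suc m) = (?r * (1 - \<alpha> x)) * ?r ^ Suc m" by (simp add: algebra_simps)
        also have "\<dots> = \<alpha> x * ?r ^ Suc m" using e by simp
        finally have h2: "(1 - \<alpha> x) * ?r ^ Suc (Suc m) = \<alpha> x * ?r ^ Suc m" .
        show ?thesis unfolding h1 h2 by (simp add: algebra_simps)
      qed
      finally show ?thesis unfolding 2(2) cK_rep[OF x] .
    qed
  qed
  moreover have "((\<lambda>w. ?\<pi> w * fcfs_kernel E_K4 V4 \<alpha> w w') has_sum BK \<alpha> ?\<pi> w') UNIV"
    by (rule K4_has_BK) (rule z)
  ultimately show "((\<lambda>w. ?\<pi> w * fcfs_kernel E_K4 V4 \<alpha> w w') has_sum ?\<pi> w') UNIV"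
    by simp
qed

lemma rep_chain:
  assumes st: "fcfs_stationary E V \<alpha> \<mu>"
    and a: "0 < a" "0 < b" "a + b = 1"
    and rec: "\<And>m. \<mu> (replicate (Suc m) x) = a * \<mu> (replicate m x) + b * \<mu> (replicate (Suc (Suc m)) x)"
  shows "\<mu> (replicate m x) = (a / b) ^ m * \<mu> []"
proof -
  define s where "s k = \<mu> (replicate k x)" for k
  have bd: "(\<Sum>k<N. s k) \<le> 1" for N
  proof -
    have "inj_on (\<lambda>k. replicate k x) {..<N}" by (auto simp: inj_on_def)
    hence "(\<Sum>k<N. s k) = sum \<mu> ((\<lambda>k. replicate k x) ` {..<N})"
      unfolding s_def by (simp add: sum.reindex)
    also have "\<dots> \<le> 1" by (rule stat_fin_le1[OF st]) simp
    finally show ?thesis .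
  qed
  have ch: "b * s (Suc k) = a * s k" for k
    by (rule chain_lemma[where a=a and b=b]) (use stat_nonneg[OF st] bd a rec in \<open>auto simp: s_def\<close>)
  show ?thesis
  proof (induction m)
    case 0 thus ?case by simp
  next
    case (Suc m)
    have "s (Suc m) = (a / b) * s m" using ch[of m] a by (simp add: field_simps)
    thus ?case using Suc by (simp add: s_def)
  qed
qed

lemma K4_unique:
  assumes ok: "okK \<alpha>" and st: "fcfs_stationary E_K4 V4 \<alpha> \<mu>"
  shows "\<mu> = (\<lambda>w. \<mu> [] * cK \<alpha> w)"
proof
  fix w
  have s: "sum \<alpha> V4 = 1" using ok okK_def by blast
  have inv: "\<not> valid E_K4 V4 w \<Longrightarrow> \<mu> w = 0" for w
    by (rule invalid_zero[OF st finV4 K4_sym K4_irr K4_dom])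
       (use ok in \<open>auto simp: okK_def s\<close>)
  have rep: "\<mu> (replicate m x) = rK \<alpha> x ^ m * \<mu> []" if x: "x \<in> V4" for x m
  proof -
    have a: "0 < \<alpha> x" "0 < 1 - \<alpha> x" using ok x by (auto simp: okK_def)
    have "\<mu> (replicate m x) = (\<alpha> x / (1 - \<alpha> x)) ^ m * \<mu> []"
    proof (rule rep_chain[OF st a])
      show "\<alpha> x + (1 - \<alpha> x) = 1" by simp
      fix m
      show "\<mu> (replicate (Suc m) x) = \<alpha> x * \<mu> (replicate m x) + (1 - \<alpha> x) * \<mu> (replicate (Suc (Suc m)) x)"
        using K4_stat_BK[OF st inv, of "replicate (Suc m) x"] BK_rep[OF x s] by simp
    qed
    thus ?thesis by (simp add: rK_def)
  qed
  show "\<mu> w = \<mu> [] * cK \<alpha> w"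
  proof (cases "valid E_K4 V4 w")
    case False thus ?thesis using inv by (simp add: cK_def)
  next
    case True
    then consider "w = []" | x m where "x \<in> V4" "w = replicate (Suc m) x"
      unfolding K4_valid by blast
    thus ?thesis
    proof cases
      case 1 thus ?thesis by (simp add: cK_nil)
    next
      case 2 thus ?thesis using rep[OF 2(1), of "Suc m"] cK_rep[OF 2(1), where n="Suc m" and \<alpha>=\<alpha>]
        by (simp del: replicate_Suc)
    qed
  qed
qed

lemma has_sum_at0: "((\<lambda>n::nat. if n = 0 then c else (0::real)) has_sum c) UNIV"
proof -
  have "((\<lambda>n::nat. if n = 0 then c else (0::real)) has_sum c) {0}"
    using has_sum_finite[of "{0::nat}" "\<lambda>n::nat. if n = 0 then c else (0::real)"] by simp
  thus ?thesis by (subst (asm) has_sum_cong_neutral[where T=UNIV]) auto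
qed

definition ZK :: "(nat \<Rightarrow> real) \<Rightarrow> real" where
  "ZK \<alpha> = (\<Sum>x\<in>V4. 1 / (1 - rK \<alpha> x)) + - 3"

definition MK :: "(nat \<Rightarrow> real) \<Rightarrow> real" where
  "MK \<alpha> = (\<Sum>x\<in>V4. rK \<alpha> x / (1 - rK \<alpha> x)^2)"

lemma K4_len_sum:
  "sum (cK \<alpha>) {w. set w \<subseteq> V4 \<and> length w = n} = (\<Sum>x\<in>V4. rK \<alpha> x ^ n) + (if n = 0 then -3 else 0)"
proof (cases n)
  case 0
  have "{w. set w \<subseteq> V4 \<and> length w = n} = {[]}" using 0 by auto
  thus ?thesis using 0 cardV4 by (simp add: cK_nil)
next
  case (Suc k)
  let ?f = "\<lambda>x. replicate (Suc k) x"
  let ?L = "{w. set w \<subseteq> V4 \<and> length w = n}"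
  have finL: "finite ?L" by (rule finite_lists_length_eq[OF finV4])
  have sub: "?f ` V4 \<subseteq> ?L" using Suc by (auto simp del: replicate_Suc)
  have z: "\<forall>w\<in>?L - ?f ` V4. cK \<alpha> w = 0"
  proof
    fix w assume w: "w \<in> ?L - ?f ` V4"
    show "cK \<alpha> w = 0"
    proof (rule ccontr)
      assume "cK \<alpha> w \<noteq> 0"
      hence "valid E_K4 V4 w" by (auto simp: cK_def split: if_splits)
      moreover have "w \<noteq> []" using w Suc by auto
      ultimately obtain y m where "y \<in> V4" "w = replicate (Suc m) y" unfolding K4_valid by blast
      moreover hence "m = k" using w Suc by (simp del: replicate_Suc)
      ultimately show False using w by (auto simp del: replicate_Suc)
    qed
  qed
  have "sum (cK \<alpha>) ?L = sum (cK \<alpha>) (?f ` V4)"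
    by (rule sum.mono_neutral_right[OF finL sub z])
  also have "\<dots> = (\<Sum>x\<in>V4. cK \<alpha> (?f x))"
    by (rule sum.reindex[unfolded comp_def]) (auto simp: inj_on_def simp del: replicate_Suc)
  also have "\<dots> = (\<Sum>x\<in>V4. rK \<alpha> x ^ n)"
    using Suc by (intro sum.cong refl) (simp add: cK_rep del: replicate_Suc)
  finally show ?thesis using Suc by simp
qed

lemma K4_sums:
  assumes ok: "okK \<alpha>"
  shows "(cK \<alpha> has_sum ZK \<alpha>) UNIV" "((\<lambda>w. cK \<alpha> w * real (length w)) has_sum MK \<alpha>) UNIV"
    "0 < ZK \<alpha>"
proof -
  have r: "0 \<le> rK \<alpha> x" "rK \<alpha> x < 1" if "x \<in> V4" for x using rK_props[OF ok that] by auto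
  have zV: "\<not> set w \<subseteq> V4 \<Longrightarrow> cK \<alpha> w = 0" for w by (simp add: cK_def valid_def)
  show "(cK \<alpha> has_sum ZK \<alpha>) UNIV"
  proof (rule has_sum_by_length[OF finV4 cK_nonneg[OF ok] zV])
    have "((\<lambda>n. (\<Sum>x\<in>V4. rK \<alpha> x ^ n) + (if n = 0 then -3 else 0)) has_sum ZK \<alpha>) UNIV"
      unfolding ZK_def
      by (intro has_sum_add has_sum_sum_fin[OF finV4] geom_has_sum has_sum_at0) (auto simp: r)
    thus "((\<lambda>n. sum (cK \<alpha>) {w. set w \<subseteq> V4 \<and> length w = n}) has_sum ZK \<alpha>) UNIV"
      by (simp only: K4_len_sum)
  qed
  show "((\<lambda>w. cK \<alpha> w * real (length w)) has_sum MK \<alpha>) UNIV"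
  proof (rule has_sum_by_length[OF finV4])
    show "0 \<le> cK \<alpha> w * real (length w)" for w using cK_nonneg[OF ok] by simp
    show "\<not> set w \<subseteq> V4 \<Longrightarrow> cK \<alpha> w * real (length w) = 0" for w using zV by simp
    have e: "sum (\<lambda>w. cK \<alpha> w * real (length w)) {w. set w \<subseteq> V4 \<and> length w = n} =
             (\<Sum>x\<in>V4. real n * rK \<alpha> x ^ n)" for n
    proof -
      have "sum (\<lambda>w. cK \<alpha> w * real (length w)) {w. set w \<subseteq> V4 \<and> length w = n} =
            sum (\<lambda>w. cK \<alpha> w * real n) {w. set w \<subseteq> V4 \<and> length w = n}"
        by (rule sum.cong) auto
      also have "\<dots> = real n * ((\<Sum>x\<in>V4. rK \<alpha> x ^ n) + (if n = 0 then -3 else 0))"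
        by (simp add: sum_distrib_right[symmetric] K4_len_sum)
      finally show ?thesis by (simp add: sum_distrib_left)
    qed
    show "((\<lambda>n. sum (\<lambda>w. cK \<alpha> w * real (length w)) {w. set w \<subseteq> V4 \<and> length w = n}) has_sum MK \<alpha>) UNIV"
      unfolding e MK_def
      by (intro has_sum_sum_fin[OF finV4] geom_len_has_sum) (auto simp: r)
  qed
  have "1 \<le> 1 / (1 - rK \<alpha> x)" if "x \<in> V4" for x using r[OF that] by (simp add: field_simps)
  hence "(\<Sum>x\<in>V4. (1::real)) \<le> (\<Sum>x\<in>V4. 1 / (1 - rK \<alpha> x))" by (intro sum_mono)
  thus "0 < ZK \<alpha>" unfolding ZK_def using cardV4 by simp
qed

lemma K4_mean:
  assumes ok: "okK \<alpha>"
  shows "fcfs_mean_length E_K4 V4 \<alpha> = MK \<alpha> / ZK \<alpha>"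
  using K4_sums[OF ok]
  by (intro mean_from_product[where c="cK \<alpha>"] K4_unique[OF ok] K4_exists[OF ok]) auto


lemma EG_iff: "E_G i j \<longleftrightarrow> (i = 1 \<and> j = 3) \<or> (i = 3 \<and> j = 1) \<or> (i = 1 \<and> j = 4) \<or> (i = 4 \<and> j = 1)
   \<or> (i = 2 \<and> j = 3) \<or> (i = 3 \<and> j = 2) \<or> (i = 2 \<and> j = 4) \<or> (i = 4 \<and> j = 2)
   \<or> (i = 3 \<and> j = 4) \<or> (i = 4 \<and> j = 3)"
  unfolding E_G_def by (auto simp: doubleton_eq_iff)

lemma G_sym: "E_G x y = E_G y x" unfolding EG_iff by auto
lemma G_irr: "\<not> E_G x x" unfolding EG_iff by auto
lemma G_dom: "x \<in> V4 \<Longrightarrow> y \<in> V4 \<Longrightarrow> i \<in> V4 \<Longrightarrow> E_G x y \<Longrightarrow> E_G i x \<or> E_G i y"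
  unfolding EG_iff V4_def by auto

lemma G_valid: "valid E_G V4 w \<longleftrightarrow>
   set w \<subseteq> {1,2} \<or> (\<exists>n. w = replicate (Suc n) 3) \<or> (\<exists>n. w = replicate (Suc n) 4)"
proof
  assume v: "valid E_G V4 w"
  hence sV: "set w \<subseteq> V4" and ind: "\<forall>x\<in>set w. \<forall>y\<in>set w. \<not> E_G x y"
    unfolding valid_def indep_def by auto
  show "set w \<subseteq> {1,2} \<or> (\<exists>n. w = replicate (Suc n) 3) \<or> (\<exists>n. w = replicate (Suc n) 4)"
  proof (cases "3 \<in> set w")
    case True
    hence "\<forall>y\<in>set w. y = 3" using ind sV unfolding EG_iff V4_def by fastforce
    hence "replicate (length w) 3 = w" by (rule replicate_length_same)
    moreover have "w \<noteq> []" using True by auto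
    ultimately show ?thesis by (metis length_greater_0_conv Suc_pred)
  next
    case n3: False
    show ?thesis
    proof (cases "4 \<in> set w")
      case True
      hence "\<forall>y\<in>set w. y = 4" using ind sV unfolding EG_iff V4_def by fastforce
      hence "replicate (length w) 4 = w" by (rule replicate_length_same)
      moreover have "w \<noteq> []" using True by auto
      ultimately show ?thesis by (metis length_greater_0_conv Suc_pred)
    next
      case False
      hence "set w \<subseteq> {1,2}" using n3 sV unfolding V4_def by auto
      thus ?thesis by simp
    qed
  qed
next
  assume "set w \<subseteq> {1,2} \<or> (\<exists>n. w = replicate (Suc n) 3) \<or> (\<exists>n. w = replicate (Suc n) 4)"
  thus "valid E_G V4 w" unfolding valid_def indep_def V4_def
    by (auto simp: EG_iff simp del: replicate_Suc)
qed

lemma G_step12: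
  assumes "set p \<subseteq> {1,2}" "i \<in> {1,2}"
  shows "fcfs_step E_G p i = p @ [i]"
proof -
  have "filter (E_G i) p = []" using assms by (auto simp: filter_empty_conv EG_iff)
  thus ?thesis by (simp add: fcfs_step_def)
qed

lemma G_step34:
  assumes "set p \<subseteq> {1,2}" "i \<in> {3,4}"
  shows "fcfs_step E_G p i = (if p = [] then [i] else tl p)"
proof -
  have "filter (E_G i) p = p" using assms by (auto simp: filter_id_conv EG_iff)
  thus ?thesis by (cases p) (simp_all add: fcfs_step_def)
qed

lemma G_step_rep:
  assumes x: "x \<in> {3,4}" and i: "i \<in> V4"
  shows "fcfs_step E_G (replicate (Suc n) x) i =
           (if i = x then replicate (Suc (Suc n)) x else replicate n x)"
proof (cases "i = x")
  case True
  hence "filter (E_G i) (replicate (Suc n) x) = []" by (simp add: G_irr del: replicate_Suc)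
  thus ?thesis using True by (simp add: fcfs_step_def replicate_append_same)
next
  case False
  hence "E_G i x" using x i unfolding EG_iff V4_def by auto
  hence "filter (E_G i) (replicate (Suc n) x) = replicate (Suc n) x"
    by (simp add: filter_replicate del: replicate_Suc)
  thus ?thesis using False by (simp add: fcfs_step_def)
qed

lemma set_tl_sub: "set (tl w) \<subseteq> set w" by (cases w) auto

lemma G_cases:
  assumes "valid E_G V4 w"
  obtains (L) "set w \<subseteq> {1,2}" | (R) y n where "y \<in> {3,4}" "w = replicate (Suc n) y"
  using assms unfolding G_valid by blast

lemma G_pre_rep:
  assumes x: "x \<in> {3,4}" and i: "i \<in> V4"
  shows "{w. valid E_G V4 w \<and> fcfs_step E_G w i = replicate (Suc m) x} =
         (if i = x then {replicate m x} else {replicate (Suc (Suc m)) x})"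
proof (intro equalityI subsetI)
  fix w assume "w \<in> {w. valid E_G V4 w \<and> fcfs_step E_G w i = replicate (Suc m) x}"
  hence v: "valid E_G V4 w" and st: "fcfs_step E_G w i = replicate (Suc m) x" by auto
  from v show "w \<in> (if i = x then {replicate m x} else {replicate (Suc (Suc m)) x})"
  proof (cases rule: G_cases)
    case L
    have xs: "x \<in> set (fcfs_step E_G w i)" using st by (simp del: replicate_Suc)
    show ?thesis
    proof (cases "i \<in> {1,2}")
      case True
      hence "fcfs_step E_G w i = w @ [i]" by (rule G_step12[OF L])
      hence "x \<in> set w \<or> x = i" using xs by auto
      hence False using L True x by auto
      thus ?thesis ..
    next
      case False
      hence i34: "i \<in> {3,4}" using i unfolding V4_def by auto
      show ?thesis
      proof (cases "w = []")
        case True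
        hence "[i] = replicate (Suc m) x" using st G_step34[OF L i34] by simp
        hence "i = x \<and> m = 0" by (cases m) auto
        thus ?thesis using True by simp
      next
        case False
        hence "x \<in> set (tl w)" using xs G_step34[OF L i34] by simp
        hence "x \<in> set w" using set_tl_sub[of w] by blast
        hence False using L x by auto
        thus ?thesis ..
      qed
    qed
  next
    case (R y n)
    note st' = st[unfolded R(2) G_step_rep[OF R(1) i]]
    show ?thesis
    proof (cases "i = y")
      case True
      hence "replicate (Suc (Suc n)) y = replicate (Suc m) x" using st' by (simp del: replicate_Suc)
      hence yx: "y = x" and mn: "m = Suc n" by (metis replicate_eq_replicate Zero_not_Suc Suc_inject)+
      have "w = replicate m x" unfolding R(2) yx mn ..
      thus ?thesis using True yx by simp
    next
      case False
      hence "replicate n y = replicate (Suc m) x" using st' by (simp del: replicate_Suc)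
      hence "y = x \<and> n = Suc m" by (metis replicate_eq_replicate Zero_not_Suc)
      thus ?thesis using False R(2) by simp
    qed
  qed
next
  fix w assume w: "w \<in> (if i = x then {replicate m x} else {replicate (Suc (Suc m)) x})"
  show "w \<in> {w. valid E_G V4 w \<and> fcfs_step E_G w i = replicate (Suc m) x}"
  proof (cases "i = x")
    case True
    hence w: "w = replicate m x" using w by simp
    show ?thesis
    proof (cases m)
      case 0
      hence "fcfs_step E_G w i = [i]" using w G_step34[of "[]" i] True x by simp
      moreover have "valid E_G V4 w" using w 0 by (simp add: G_valid)
      ultimately show ?thesis using True 0 by simp
    next
      case (Suc k)
      have "fcfs_step E_G w i = replicate (Suc m) x"
        using w Suc G_step_rep[OF x i, of k] True by (simp del: replicate_Suc)
      moreover have "valid E_G V4 w" using w Suc x by (auto simp: G_valid simp del: replicate_Suc)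
      ultimately show ?thesis by simp
    qed
  next
    case False
    hence w: "w = replicate (Suc (Suc m)) x" using w by simp
    have "fcfs_step E_G w i = replicate (Suc m) x"
      unfolding w using G_step_rep[OF x i, of "Suc m"] False by simp
    moreover have "valid E_G V4 w" unfolding w G_valid using x by blast
    ultimately show ?thesis by simp
  qed
qed

lemma G_pre_12:
  assumes p: "p \<noteq> []" "set p \<subseteq> {1,2}" and i: "i \<in> {1,2}"
  shows "{w. valid E_G V4 w \<and> fcfs_step E_G w i = p} = (if last p = i then {butlast p} else {})"
proof (intro equalityI subsetI)
  fix w assume "w \<in> {w. valid E_G V4 w \<and> fcfs_step E_G w i = p}"
  hence v: "valid E_G V4 w" and st: "fcfs_step E_G w i = p" by auto
  from v show "w \<in> (if last p = i then {butlast p} else {})"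
  proof (cases rule: G_cases)
    case L
    hence "p = w @ [i]" using st G_step12[OF L i] by simp
    thus ?thesis by simp
  next
    case (R y n)
    have iy: "i \<noteq> y" using i R(1) by auto
    have iV: "i \<in> V4" using i unfolding V4_def by auto
    hence "p = replicate n y" using st R(2) G_step_rep[OF R(1) iV, of n] iy by simp
    hence "y \<in> set p" using p(1) by (cases n) auto
    hence False using p(2) R(1) by auto
    thus ?thesis ..
  qed
next
  fix w assume "w \<in> (if last p = i then {butlast p} else {})"
  hence w: "w = butlast p" "last p = i" by (auto split: if_splits)
  have "set (butlast p) \<subseteq> set p" by (auto dest: in_set_butlastD)
  hence sw: "set w \<subseteq> {1,2}" using w(1) p(2) by simp
  hence "fcfs_step E_G w i = butlast p @ [last p]" using G_step12[OF sw i] w by simp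
  also have "\<dots> = p" using p(1) by simp
  finally show "w \<in> {w. valid E_G V4 w \<and> fcfs_step E_G w i = p}"
    using sw by (simp add: G_valid)
qed

lemma G_pre_34:
  assumes p: "p \<noteq> []" "set p \<subseteq> {1,2}" and i: "i \<in> {3,4}"
  shows "{w. valid E_G V4 w \<and> fcfs_step E_G w i = p} = {1#p, 2#p}"
proof (intro equalityI subsetI)
  fix w assume "w \<in> {w. valid E_G V4 w \<and> fcfs_step E_G w i = p}"
  hence v: "valid E_G V4 w" and st: "fcfs_step E_G w i = p" by auto
  from v show "w \<in> {1#p, 2#p}"
  proof (cases rule: G_cases)
    case L
    show ?thesis
    proof (cases w)
      case Nil
      hence "p = [i]" using st G_step34[OF L i] by simp
      thus ?thesis using p(2) i by auto
    next
      case (Cons a t)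
      hence "p = t" using st G_step34[OF L i] by simp
      thus ?thesis using Cons L by auto
    qed
  next
    case (R y n)
    have iV: "i \<in> V4" using i unfolding V4_def by auto
    have "y \<in> set p"
    proof (cases "i = y")
      case True
      hence "p = replicate (Suc (Suc n)) y" using st R(2) G_step_rep[OF R(1) iV, of n] by simp
      thus ?thesis by simp
    next
      case False
      hence "p = replicate n y" using st R(2) G_step_rep[OF R(1) iV, of n] by simp
      thus ?thesis using p(1) by (cases n) auto
    qed
    thus ?thesis using p(2) R(1) by auto
  qed
next
  fix w assume "w \<in> {1#p, 2#p}"
  then obtain a where a: "a \<in> {1,2}" "w = a # p" by auto
  have sw: "set w \<subseteq> {1,2}" using a p(2) by auto
  have "fcfs_step E_G w i = p" using G_step34[OF sw i] a by simp
  thus "w \<in> {w. valid E_G V4 w \<and> fcfs_step E_G w i = p}" using sw by (simp add: G_valid)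
qed

lemma G_pre_nil:
  assumes i: "i \<in> V4"
  shows "{w. valid E_G V4 w \<and> fcfs_step E_G w i = []} =
    (if i \<in> {1,2} then {[3],[4]} else if i = 3 then {[1],[2],[4]} else {[1],[2],[3]})"
proof (intro equalityI subsetI)
  fix w assume "w \<in> {w. valid E_G V4 w \<and> fcfs_step E_G w i = []}"
  hence v: "valid E_G V4 w" and st: "fcfs_step E_G w i = []" by auto
  from v show "w \<in> (if i \<in> {1,2} then {[3],[4]} else if i = 3 then {[1],[2],[4]} else {[1],[2],[3]})"
  proof (cases rule: G_cases)
    case L
    show ?thesis
    proof (cases "i \<in> {1,2}")
      case True thus ?thesis using st G_step12[OF L True] by simp
    next
      case False
      hence i34: "i \<in> {3,4}" using i unfolding V4_def by auto
      have "w \<noteq> []" using st G_step34[OF L i34] by auto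
      hence "tl w = []" using st G_step34[OF L i34] by simp
      then obtain a where "w = [a]" "a \<in> {1,2}" using L \<open>w \<noteq> []\<close> by (cases w) auto
      thus ?thesis using i34 by auto
    qed
  next
    case (R y n)
    have "i \<noteq> y \<and> n = 0" using st R(2) G_step_rep[OF R(1) i, of n] by (auto split: if_splits)
    thus ?thesis using R i unfolding V4_def by auto
  qed
next
  fix w :: "nat list" assume w: "w \<in> (if i \<in> {1,2} then {[3],[4]} else if i = 3 then {[1],[2],[4]} else {[1],[2],[3]})"
  have iv: "i = 1 \<or> i = 2 \<or> i = 3 \<or> i = 4" using i by (auto simp: V4_def)
  thus "w \<in> {w. valid E_G V4 w \<and> fcfs_step E_G w i = []}"
  proof (elim disjE)
    assume "i = 1" thus ?thesis using w
      by (auto simp: fcfs_step_def EG_iff valid_def indep_def V4_def)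
  next
    assume "i = 2" thus ?thesis using w
      by (auto simp: fcfs_step_def EG_iff valid_def indep_def V4_def)
  next
    assume "i = 3" thus ?thesis using w
      by (auto simp: fcfs_step_def EG_iff valid_def indep_def V4_def)
  next
    assume "i = 4" thus ?thesis using w
      by (auto simp: fcfs_step_def EG_iff valid_def indep_def V4_def)
  qed
qed


definition L2 :: "nat \<Rightarrow> nat list set" where
  "L2 n = {p. set p \<subseteq> {1,2} \<and> length p = n}"

lemma finL2: "finite (L2 n)"
  unfolding L2_def by (rule finite_lists_length_eq) simp

lemma L2_0: "L2 0 = {[]}" by (auto simp: L2_def)

lemma L2_cons: "L2 (Suc n) = (\<lambda>(p,y). y#p) ` (L2 n \<times> {1,2})"
  unfolding L2_def by (rule lists_length_Suc_eq)

lemma L2_snoc: "L2 (Suc n) = (\<lambda>(p,y). p@[y]) ` (L2 n \<times> {1,2})"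
proof (intro equalityI subsetI)
  fix q assume q: "q \<in> L2 (Suc n)"
  hence "q \<noteq> []" by (auto simp: L2_def)
  hence "q = butlast q @ [last q]" by simp
  moreover have "last q \<in> set q" using \<open>q \<noteq> []\<close> by simp
  moreover have sq: "set q \<subseteq> {1,2}" using q by (simp add: L2_def)
  moreover have "last q \<in> {1,2}" using sq \<open>last q \<in> set q\<close> by blast
  moreover have "butlast q \<in> L2 n"
    using q \<open>q \<noteq> []\<close> by (auto simp: L2_def dest: in_set_butlastD)
  ultimately show "q \<in> (\<lambda>(p,y). p@[y]) ` (L2 n \<times> {1,2})"
    by (intro image_eqI[where x="(butlast q, last q)"]) simp_all
next
  fix q assume "q \<in> (\<lambda>(p,y). p@[y]) ` (L2 n \<times> {1,2})"
  thus "q \<in> L2 (Suc n)" by (auto simp: L2_def)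
qed

lemma sum_L2_cons: "(\<Sum>q\<in>L2 (Suc n). f q) = (\<Sum>p\<in>L2 n. f (1#p) + f (2#p))"
proof -
  have inj: "inj_on (\<lambda>(p,y). y#p) (L2 n \<times> {1,2})" by (auto simp: inj_on_def)
  have "(\<Sum>q\<in>L2 (Suc n). f q) = (\<Sum>(p,y)\<in>L2 n \<times> {1,2}. f (y#p))"
    unfolding L2_cons by (subst sum.reindex[OF inj]) (simp add: split_def o_def)
  also have "\<dots> = (\<Sum>p\<in>L2 n. \<Sum>y\<in>{1,2}. f (y#p))"
    by (rule sum.cartesian_product[symmetric])
  finally show ?thesis by simp
qed

lemma sum_L2_snoc: "(\<Sum>q\<in>L2 (Suc n). f q) = (\<Sum>p\<in>L2 n. f (p@[1]) + f (p@[2]))"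
proof -
  have inj: "inj_on (\<lambda>(p,y). p@[y]) (L2 n \<times> {1,2})" by (auto simp: inj_on_def)
  have "(\<Sum>q\<in>L2 (Suc n). f q) = (\<Sum>(p,y)\<in>L2 n \<times> {1,2}. f (p@[y]))"
    unfolding L2_snoc by (subst sum.reindex[OF inj]) (simp add: split_def o_def)
  also have "\<dots> = (\<Sum>p\<in>L2 n. \<Sum>y\<in>{1,2}. f (p@[y]))"
    by (rule sum.cartesian_product[symmetric])
  finally show ?thesis by simp
qed

definition cT :: "(nat \<Rightarrow> real) \<Rightarrow> real \<Rightarrow> nat list \<Rightarrow> real" where
  "cT a b v = prod_list (map (\<lambda>y. a y / b) v)"

lemma tree_unique:
  fixes \<mu> :: "nat list \<Rightarrow> real" and a :: "nat \<Rightarrow> real" and b :: real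
  assumes nn: "\<And>w. 0 \<le> \<mu> w" and fb: "\<And>F. finite F \<Longrightarrow> sum \<mu> F \<le> 1"
    and bal: "\<And>p. p \<noteq> [] \<Longrightarrow> set p \<subseteq> {1,2} \<Longrightarrow>
               \<mu> p = a (last p) * \<mu> (butlast p) + b * (\<mu> (1#p) + \<mu> (2#p))"
    and a: "0 \<le> a 1" "0 \<le> a 2" "a 1 + a 2 + b = 1" "a 1 + a 2 \<le> b" "0 < b" "b < 1"
  shows "set v \<subseteq> {1,2} \<Longrightarrow> \<mu> v = cT a b v * \<mu> []"
proof -
  define A where "A = a 1 + a 2"
  define \<rho> where "\<rho> = A / b"
  define e where "e = \<mu> []"
  have \<rho>: "0 \<le> \<rho>" "\<rho> \<le> 1" using a by (auto simp: \<rho>_def A_def)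
  have e: "0 \<le> e" "e \<le> 1" using nn fb[of "{[]}"] by (auto simp: e_def)
  define T where "T v n = (\<Sum>p\<in>L2 n. \<mu> (p @ v))" for v n
  have Tb: "0 \<le> T v n \<and> T v n \<le> 1" for v n
  proof -
    have "inj_on (\<lambda>p. p @ v) (L2 n)" by (auto simp: inj_on_def)
    hence "T v n = sum \<mu> ((\<lambda>p. p @ v) ` L2 n)" unfolding T_def by (simp add: sum.reindex)
    moreover have "sum \<mu> ((\<lambda>p. p @ v) ` L2 n) \<le> 1" by (rule fb) (simp add: finL2)
    ultimately show ?thesis using nn unfolding T_def by (auto intro: sum_nonneg)
  qed
  \<comment> \<open>the lumped chain\<close>
  define g where "g n = T [] n" for n
  have grec: "g (Suc m) = A * g m + b * g (Suc (Suc m))" for m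
  proof -
    have "g (Suc m) = (\<Sum>p\<in>L2 (Suc m). a (last p) * \<mu> (butlast p) + b * (\<mu> (1#p) + \<mu> (2#p)))"
      unfolding g_def T_def append_Nil2 by (rule sum.cong[OF refl], rule bal) (auto simp: L2_def)
    also have "\<dots> = (\<Sum>p\<in>L2 (Suc m). a (last p) * \<mu> (butlast p)) + b * (\<Sum>p\<in>L2 (Suc m). \<mu> (1#p) + \<mu> (2#p))"
      by (subst sum_distrib_left) (rule sum.distrib)
    also have "(\<Sum>p\<in>L2 (Suc m). a (last p) * \<mu> (butlast p)) = A * g m"
    proof -
      have "(\<Sum>p\<in>L2 (Suc m). a (last p) * \<mu> (butlast p)) = (\<Sum>p\<in>L2 m. a 1 * \<mu> p + a 2 * \<mu> p)"
        unfolding sum_L2_snoc by simp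
      also have "\<dots> = (a 1 + a 2) * sum \<mu> (L2 m)" by (simp add: sum_distrib_left distrib_right sum.distrib)
      finally show ?thesis unfolding g_def T_def A_def by simp
    qed
    also have "(\<Sum>p\<in>L2 (Suc m). \<mu> (1#p) + \<mu> (2#p)) = g (Suc (Suc m))"
      unfolding g_def T_def using sum_L2_cons[where n="Suc m" and f=\<mu>] by simp
    finally show ?thesis .
  qed
  have gbd: "(\<Sum>k<N. g k) \<le> 1" for N
  proof -
    have d: "\<forall>i\<in>{..<N}. \<forall>j\<in>{..<N}. i \<noteq> j \<longrightarrow> L2 i \<inter> L2 j = {}" by (auto simp: L2_def)
    have "(\<Sum>k<N. g k) = sum \<mu> (\<Union>k<N. L2 k)"
      unfolding g_def T_def by (simp add: sum.UNION_disjoint[OF _ _ d] finL2)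
    also have "\<dots> \<le> 1" by (rule fb) (simp add: finL2)
    finally show ?thesis .
  qed
  have gch: "b * g (Suc m) = A * g m" for m
  proof -
    have gnn: "\<And>m. 0 \<le> g m" using Tb by (simp add: g_def)
    have Ab: "A + b = 1" "0 \<le> A" "0 \<le> b" using a by (auto simp: A_def)
    show ?thesis by (rule chain_lemma[OF gnn gbd Ab grec])
  qed
  have g: "g n = \<rho> ^ n * e" for n
  proof (induction n)
    case 0 thus ?case by (simp add: g_def T_def L2_0 e_def)
  next
    case (Suc n)
    have "g (Suc n) = \<rho> * g n" using gch[of n] a(5) by (simp add: \<rho>_def field_simps)
    thus ?case using Suc by simp
  qed
  have main: "set v \<subseteq> {1,2} \<longrightarrow> (\<forall>n. T v n = cT a b v * \<rho> ^ n * e)" for v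
  proof (induction v rule: rev_induct)
    case Nil
    show ?case using g by (simp add: cT_def g_def)
  next
    case (snoc x u)
    show ?case
    proof (intro impI allI)
      fix n assume sv: "set (u @ [x]) \<subseteq> {1,2}"
      hence su: "set u \<subseteq> {1,2}" and x: "x \<in> {1,2}" by auto
      have IH: "T u n = cT a b u * \<rho> ^ n * e" for n using snoc su by blast
      let ?v = "u @ [x]"
      have cv: "cT a b ?v = cT a b u * (a x / b)" by (simp add: cT_def)
      have rec: "T ?v n = a x * T u n + b * T ?v (Suc n)" for n
      proof -
        have "T ?v n = (\<Sum>p\<in>L2 n. a x * \<mu> (p @ u) + b * (\<mu> (1 # (p @ ?v)) + \<mu> (2 # (p @ ?v))))"
          unfolding T_def
        proof (rule sum.cong[OF refl])
          fix p assume "p \<in> L2 n"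
          hence "set (p @ ?v) \<subseteq> {1,2}" using sv by (auto simp: L2_def)
          from bal[OF _ this] show "\<mu> (p @ ?v) = a x * \<mu> (p @ u) + b * (\<mu> (1 # (p @ ?v)) + \<mu> (2 # (p @ ?v)))"
            by (simp add: butlast_append)
        qed
        also have "\<dots> = a x * T u n + b * (\<Sum>p\<in>L2 n. \<mu> (1 # (p @ ?v)) + \<mu> (2 # (p @ ?v)))"
          unfolding T_def by (subst sum_distrib_left)+ (rule sum.distrib)
        also have "(\<Sum>p\<in>L2 n. \<mu> (1 # (p @ ?v)) + \<mu> (2 # (p @ ?v))) = T ?v (Suc n)"
          unfolding T_def using sum_L2_cons[where n=n and f="\<lambda>q. \<mu> (q @ ?v)"] by simp
        finally show ?thesis .
      qed
      define U where "U n = T ?v n - cT a b ?v * \<rho> ^ n * e" for n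
      have Ustep: "U n = b * U (Suc n)" for n
      proof -
        have Ab: "A + b = 1" using a by (simp add: A_def)
        have "b * U (Suc n) = T ?v n - a x * T u n - b * (cT a b u * (a x / b)) * \<rho> ^ Suc n * e"
          unfolding U_def cv using rec[of n] by (simp add: algebra_simps)
        also have "\<dots> = T ?v n - a x * cT a b u * \<rho> ^ n * e * (1 + \<rho>)"
          unfolding IH using a(5) by (simp add: field_simps)
        also have "1 + \<rho> = 1 / b" using a(5) Ab by (simp add: \<rho>_def field_simps)
        finally show ?thesis unfolding U_def cv by (simp add: field_simps)
      qed
      have cnn: "0 \<le> cT a b ?v" unfolding cT_def
        using a sv by (intro prod_list_nonneg) auto
      have Ubd: "\<bar>U k\<bar> \<le> 1 + cT a b ?v" for k
      proof -
        have "0 \<le> cT a b ?v * \<rho> ^ k * e" using cnn \<rho> e by simp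
        moreover have "cT a b ?v * \<rho> ^ k * e \<le> cT a b ?v"
        proof -
          have "\<rho> ^ k * e \<le> 1" using \<rho> e by (intro mult_le_one power_le_one) auto
          hence "cT a b ?v * (\<rho> ^ k * e) \<le> cT a b ?v * 1" using cnn by (intro mult_left_mono) auto
          thus ?thesis by (simp add: mult.assoc)
        qed
        ultimately show ?thesis using Tb[of ?v k] unfolding U_def by linarith
      qed
      have U0: "U 0 = b ^ k * U k" for k
      proof (induction k)
        case 0 show ?case by simp
      next
        case (Suc k)
        have "U 0 = b ^ k * (b * U (Suc k))" using Suc Ustep[of k] by simp
        thus ?case by (simp add: algebra_simps)
      qed
      have "U 0 = 0"
      proof (rule ccontr)
        assume "U 0 \<noteq> 0"
        hence "0 < \<bar>U 0\<bar> / (1 + cT a b ?v)" using cnn by simp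
        then obtain k where k: "b ^ k < \<bar>U 0\<bar> / (1 + cT a b ?v)"
          using real_arch_pow_inv a(6) by blast
        have "\<bar>U 0\<bar> = b ^ k * \<bar>U k\<bar>" using U0[of k] a(5) by (simp add: abs_mult)
        also have "\<dots> \<le> b ^ k * (1 + cT a b ?v)" using Ubd[of k] a(5) by (simp add: mult_left_mono)
        finally show False using k cnn by (simp add: field_simps)
      qed
      have "U n = 0" for n
      proof (induction n)
        case 0 show ?case by (rule \<open>U 0 = 0\<close>)
      next
        case (Suc n) thus ?case using Ustep[of n] a(5) by simp
      qed
      thus "T ?v n = cT a b ?v * \<rho> ^ n * e" unfolding U_def by simp
    qed
  qed
  assume "set v \<subseteq> {1,2}"
  hence "T v 0 = cT a b v * e" using main by simp
  thus "\<mu> v = cT a b v * \<mu> []" by (simp add: T_def L2_0 e_def)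
qed


definition betaG :: "(nat \<Rightarrow> real) \<Rightarrow> real" where "betaG \<alpha> = \<alpha> 3 + \<alpha> 4"

definition cG :: "(nat \<Rightarrow> real) \<Rightarrow> nat list \<Rightarrow> real" where
  "cG \<alpha> w = (if set w \<subseteq> {1,2} then cT \<alpha> (betaG \<alpha>) w
              else if valid E_G V4 w then rK \<alpha> (hd w) ^ length w else 0)"

definition okG :: "(nat \<Rightarrow> real) \<Rightarrow> bool" where
  "okG \<alpha> \<longleftrightarrow> (\<forall>x\<in>V4. 0 < \<alpha> x) \<and> sum \<alpha> V4 = 1 \<and> \<alpha> 1 + \<alpha> 2 < \<alpha> 3 + \<alpha> 4
              \<and> \<alpha> 3 < 1/2 \<and> \<alpha> 4 < 1/2"

definition BG :: "(nat \<Rightarrow> real) \<Rightarrow> (nat list \<Rightarrow> real) \<Rightarrow> nat list \<Rightarrow> real" where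
  "BG \<alpha> \<mu> w' = (\<Sum>i\<in>V4. \<alpha> i * sum \<mu> {w \<in> {w. valid E_G V4 w}. fcfs_step E_G w i = w'})"

lemma sumV4: "sum f V4 = f 1 + f 2 + f 3 + f (4::nat)"
  by (simp add: V4_def add.assoc)

lemma okG_facts:
  assumes "okG \<alpha>"
  shows "0 < \<alpha> 1" "0 < \<alpha> 2" "0 < \<alpha> 3" "0 < \<alpha> 4" "\<alpha> 1 + \<alpha> 2 + \<alpha> 3 + \<alpha> 4 = 1"
    "\<alpha> 1 + \<alpha> 2 < \<alpha> 3 + \<alpha> 4" "\<alpha> 3 < 1/2" "\<alpha> 4 < 1/2"
  using assms unfolding okG_def sumV4 by (auto simp: V4_def)

lemma BG_expand:
  "BG \<alpha> \<mu> w' = \<alpha> 1 * sum \<mu> {w. valid E_G V4 w \<and> fcfs_step E_G w 1 = w'}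
     + \<alpha> 2 * sum \<mu> {w. valid E_G V4 w \<and> fcfs_step E_G w 2 = w'}
     + \<alpha> 3 * sum \<mu> {w. valid E_G V4 w \<and> fcfs_step E_G w 3 = w'}
     + \<alpha> 4 * sum \<mu> {w. valid E_G V4 w \<and> fcfs_step E_G w 4 = w'}"
  unfolding BG_def sumV4 by simp

lemma BG_12:
  assumes p: "p \<noteq> []" "set p \<subseteq> {1,2}"
  shows "BG \<alpha> \<mu> p = \<alpha> (last p) * \<mu> (butlast p) + (\<alpha> 3 + \<alpha> 4) * (\<mu> (1#p) + \<mu> (2#p))"
proof -
  have l: "last p \<in> {1,2}" using p last_in_set[OF p(1)] by blast
  have d: "sum \<mu> {1#p, 2#p} = \<mu> (1#p) + \<mu> (2#p)" by simp
  show ?thesis unfolding BG_expand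
    using G_pre_12[OF p, of 1] G_pre_12[OF p, of 2] G_pre_34[OF p, of 3] G_pre_34[OF p, of 4] l
    by (auto simp: d algebra_simps)
qed

lemma BG_rep:
  assumes x: "x \<in> {3,4}" and s: "sum \<alpha> V4 = 1"
  shows "BG \<alpha> \<mu> (replicate (Suc m) x) = \<alpha> x * \<mu> (replicate m x) + (1 - \<alpha> x) * \<mu> (replicate (Suc (Suc m)) x)"
proof -
  have xV: "x \<in> V4" using x by (auto simp: V4_def)
  have "BG \<alpha> \<mu> (replicate (Suc m) x) = (\<Sum>i\<in>V4. \<alpha> i * (if i = x then \<mu> (replicate m x) else \<mu> (replicate (Suc (Suc m)) x)))"
    unfolding BG_def
  proof (rule sum.cong[OF refl])
    fix i assume i: "i \<in> V4"
    have "{w \<in> {w. valid E_G V4 w}. fcfs_step E_G w i = replicate (Suc m) x} =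
          (if i = x then {replicate m x} else {replicate (Suc (Suc m)) x})"
      using G_pre_rep[OF x i, of m] by simp
    thus "\<alpha> i * sum \<mu> {w \<in> {w. valid E_G V4 w}. fcfs_step E_G w i = replicate (Suc m) x} =
          \<alpha> i * (if i = x then \<mu> (replicate m x) else \<mu> (replicate (Suc (Suc m)) x))"
      by (simp del: replicate_Suc)
  qed
  also have "\<dots> = \<alpha> x * \<mu> (replicate m x) + (1 - \<alpha> x) * \<mu> (replicate (Suc (Suc m)) x)"
    by (rule sum_if_eq[OF finV4 xV s])
  finally show ?thesis .
qed

lemma BG_nil:
  "BG \<alpha> \<mu> [] = (\<alpha> 1 + \<alpha> 2) * (\<mu> [3] + \<mu> [4]) + \<alpha> 3 * (\<mu> [1] + \<mu> [2] + \<mu> [4])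
                 + \<alpha> 4 * (\<mu> [1] + \<mu> [2] + \<mu> [3])"
proof -
  have V: "(1::nat) \<in> V4" "(2::nat) \<in> V4" "(3::nat) \<in> V4" "(4::nat) \<in> V4" by (simp_all add: V4_def)
  show ?thesis unfolding BG_expand
    using G_pre_nil[OF V(1)] G_pre_nil[OF V(2)] G_pre_nil[OF V(3)] G_pre_nil[OF V(4)]
    by (simp add: algebra_simps)
qed

lemma BG_inv:
  assumes "\<not> valid E_G V4 w'"
  shows "BG \<alpha> \<mu> w' = 0"
proof -
  have e: "{w \<in> {w. valid E_G V4 w}. fcfs_step E_G w i = w'} = {}" if "i \<in> V4" for i
    using pre_invalid[of E_G i V4 w', OF G_sym G_irr that assms] by simp
  have "\<alpha> i * sum \<mu> {w \<in> {w. valid E_G V4 w}. fcfs_step E_G w i = w'} = 0" if "i \<in> V4" for i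
    by (subst e[OF that]) simp
  thus ?thesis unfolding BG_def by (intro sum.neutral) blast
qed

lemma G_stat_BG:
  assumes "fcfs_stationary E_G V4 \<alpha> \<mu>" "\<And>w. \<not> valid E_G V4 w \<Longrightarrow> \<mu> w = 0"
  shows "\<mu> w' = BG \<alpha> \<mu> w'"
  unfolding BG_def
  by (rule stat_eq[OF assms(1) finV4]) (use assms(2) in \<open>auto simp: valid_def in_lists_conv_set\<close>)

lemma G_has_BG:
  assumes "\<And>w. \<not> valid E_G V4 w \<Longrightarrow> \<mu> w = 0"
  shows "((\<lambda>w. \<mu> w * fcfs_kernel E_G V4 \<alpha> w w') has_sum BG \<alpha> \<mu> w') UNIV"
  unfolding BG_def
  by (rule inflow[OF finV4]) (use assms in \<open>auto simp: valid_def in_lists_conv_set\<close>)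

lemma cT_cons: "cT a b (y#p) = a y / b * cT a b p" by (simp add: cT_def)
lemma cT_snoc: "cT a b (p @ [y]) = cT a b p * (a y / b)" by (simp add: cT_def)
lemma cT_nil: "cT a b [] = 1" by (simp add: cT_def)

lemma cG_L: "set w \<subseteq> {1,2} \<Longrightarrow> cG \<alpha> w = cT \<alpha> (betaG \<alpha>) w"
  by (simp add: cG_def)

lemma cG_rep: assumes x: "x \<in> {3,4}" shows "cG \<alpha> (replicate n x) = rK \<alpha> x ^ n"
proof (cases n)
  case 0 thus ?thesis by (simp add: cG_def cT_nil)
next
  case (Suc k)
  have "\<not> set (replicate n x) \<subseteq> {1,2}" using Suc x by auto
  moreover have "valid E_G V4 (replicate n x)" unfolding G_valid Suc using x by blast
  ultimately show ?thesis using Suc by (simp add: cG_def del: replicate_Suc)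
qed

lemma cG_nil: "cG \<alpha> [] = 1" by (simp add: cG_def cT_nil)

lemma rK_okG:
  assumes ok: "okG \<alpha>" and x: "x \<in> {3,4}"
  shows "0 \<le> rK \<alpha> x" "rK \<alpha> x < 1" "rK \<alpha> x * (1 - \<alpha> x) = \<alpha> x"
proof -
  have "0 < \<alpha> x" "\<alpha> x < 1/2" using okG_facts[OF ok] x by auto
  thus "0 \<le> rK \<alpha> x" "rK \<alpha> x < 1" "rK \<alpha> x * (1 - \<alpha> x) = \<alpha> x"
    unfolding rK_def by (auto simp: field_simps)
qed

lemma cT_nonneg:
  assumes ok: "okG \<alpha>" and w: "set w \<subseteq> {1,2}"
  shows "0 \<le> cT \<alpha> (betaG \<alpha>) w"
proof -
  have "0 < betaG \<alpha>" "0 < \<alpha> 1" "0 < \<alpha> 2" using okG_facts[OF ok] by (auto simp: betaG_def)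
  thus ?thesis unfolding cT_def using w by (intro prod_list_nonneg) auto
qed

lemma cG_nonneg:
  assumes ok: "okG \<alpha>" shows "0 \<le> cG \<alpha> w"
proof (cases "valid E_G V4 w")
  case False
  hence "\<not> set w \<subseteq> {1,2}" by (auto simp: G_valid)
  thus ?thesis using False by (simp add: cG_def)
next
  case True
  thus ?thesis
  proof (cases rule: G_cases)
    case L thus ?thesis using cT_nonneg[OF ok] by (simp add: cG_L)
  next
    case (R y n)
    have "cG \<alpha> w = rK \<alpha> y ^ Suc n" unfolding R(2) by (rule cG_rep[OF R(1)])
    thus ?thesis using rK_okG(1)[OF ok R(1)] by simp
  qed
qed

lemma G_exists:
  assumes ok: "okG \<alpha>" and Z: "(cG \<alpha> has_sum Z) UNIV" "0 < Z"
  shows "fcfs_stationary E_G V4 \<alpha> (\<lambda>w. cG \<alpha> w / Z)"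
  unfolding fcfs_stationary_def
proof (intro conjI allI impI)
  fix w show "0 \<le> cG \<alpha> w / Z" using cG_nonneg[OF ok] Z(2) by simp
next
  fix w assume "w \<notin> lists V4"
  hence "\<not> valid E_G V4 w" by (auto simp: valid_def in_lists_conv_set)
  moreover hence "\<not> set w \<subseteq> {1,2}" by (auto simp: G_valid)
  ultimately show "cG \<alpha> w / Z = 0" by (simp add: cG_def)
next
  show "((\<lambda>w. cG \<alpha> w / Z) has_sum 1) UNIV"
    using has_sum_cmult_left[OF Z(1), of "1/Z"] Z(2) by simp
next
  fix w'
  let ?\<pi> = "\<lambda>w. cG \<alpha> w / Z"
  let ?b = "betaG \<alpha>"
  have F: "0 < \<alpha> 1" "0 < \<alpha> 2" "0 < \<alpha> 3" "0 < \<alpha> 4" "\<alpha> 1 + \<alpha> 2 + \<alpha> 3 + \<alpha> 4 = 1"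
    "\<alpha> 3 < 1/2" "\<alpha> 4 < 1/2" using okG_facts[OF ok] by auto
  have bpos: "0 < ?b" using F by (simp add: betaG_def)
  have z: "\<And>w. \<not> valid E_G V4 w \<Longrightarrow> ?\<pi> w = 0"
  proof -
    fix w assume "\<not> valid E_G V4 w"
    moreover hence "\<not> set w \<subseteq> {1,2}" by (auto simp: G_valid)
    ultimately show "?\<pi> w = 0" by (simp add: cG_def)
  qed
  have s: "sum \<alpha> V4 = 1" using F by (simp add: sumV4)
  have "BG \<alpha> ?\<pi> w' = ?\<pi> w'"
  proof (cases "valid E_G V4 w'")
    case False thus ?thesis using BG_inv z by simp
  next
    case True
    thus ?thesis
    proof (cases rule: G_cases)
      case L
      show ?thesis
      proof (cases "w' = []")
        case True
        define r3 where "r3 = rK \<alpha> 3"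
        define r4 where "r4 = rK \<alpha> 4"
        define q1 where "q1 = \<alpha> 1 / ?b"
        define q2 where "q2 = \<alpha> 2 / ?b"
        have c1: "cG \<alpha> [1] = q1" "cG \<alpha> [2] = q2"
          by (simp_all add: cG_def cT_def q1_def q2_def)
        have c3: "cG \<alpha> [3] = r3" "cG \<alpha> [4] = r4"
          using cG_rep[of 3 \<alpha> 1] cG_rep[of 4 \<alpha> 1] by (simp_all add: r3_def r4_def)
        have e3: "\<alpha> 1 + \<alpha> 2 + \<alpha> 4 = 1 - \<alpha> 3" using F(5) by linarith
        have e4: "\<alpha> 1 + \<alpha> 2 + \<alpha> 3 = 1 - \<alpha> 4" using F(5) by linarith
        have h3: "r3 * (\<alpha> 1 + \<alpha> 2 + \<alpha> 4) = \<alpha> 3"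
          unfolding e3 r3_def by (rule rK_okG(3)[OF ok]) simp
        have h4: "r4 * (\<alpha> 1 + \<alpha> 2 + \<alpha> 3) = \<alpha> 4"
          unfolding e4 r4_def by (rule rK_okG(3)[OF ok]) simp
        have hc0: "(q1 + q2) * ?b = \<alpha> 1 + \<alpha> 2"
          using bpos by (simp add: q1_def q2_def add_divide_distrib[symmetric])
        have hc: "(q1 + q2) * (\<alpha> 3 + \<alpha> 4) = \<alpha> 1 + \<alpha> 2"
          using hc0 by (simp add: betaG_def)
        have "(\<alpha> 1 + \<alpha> 2) * (r3 + r4) + \<alpha> 3 * (q1 + q2 + r4) + \<alpha> 4 * (q1 + q2 + r3)
              = r3 * (\<alpha> 1 + \<alpha> 2 + \<alpha> 4) + r4 * (\<alpha> 1 + \<alpha> 2 + \<alpha> 3) + (q1 + q2) * (\<alpha> 3 + \<alpha> 4)"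
          by (simp add: algebra_simps)
        also have "\<dots> = 1" unfolding h3 h4 hc using F(5) by simp
        finally have e: "(\<alpha> 1 + \<alpha> 2) * (r3 + r4) + \<alpha> 3 * (q1 + q2 + r4) + \<alpha> 4 * (q1 + q2 + r3) = 1" .
        have "BG \<alpha> ?\<pi> w' = ((\<alpha> 1 + \<alpha> 2) * (r3 + r4) + \<alpha> 3 * (q1 + q2 + r4) + \<alpha> 4 * (q1 + q2 + r3)) / Z"
          unfolding True BG_nil c1 c3 by (simp add: add_divide_distrib[symmetric] algebra_simps)
        thus ?thesis unfolding e using True by (simp add: cG_nil)
      next
        case False
        define l where "l = last w'"
        define u where "u = butlast w'"
        have wu: "w' = u @ [l]" using False by (simp add: u_def l_def)
        have su: "set u \<subseteq> {1,2}" using L wu by auto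
        have l12: "l \<in> {1,2}" using L wu by auto
        have s1: "set (1 # w') \<subseteq> {1,2}" "set (2 # w') \<subseteq> {1,2}" using L by auto
        have cp: "cG \<alpha> w' = cT \<alpha> ?b u * (\<alpha> l / ?b)" using cG_L[OF L] wu by (simp add: cT_snoc)
        define C where "C = cG \<alpha> w'"
        have p1: "cG \<alpha> (1#w') = \<alpha> 1 / ?b * C"
          unfolding C_def cG_L[OF s1(1)] cG_L[OF L] by (simp add: cT_cons)
        have p2: "cG \<alpha> (2#w') = \<alpha> 2 / ?b * C"
          unfolding C_def cG_L[OF s1(2)] cG_L[OF L] by (simp add: cT_cons)
        have A1: "\<alpha> l * cG \<alpha> u = ?b * C"
          unfolding C_def cp cG_L[OF su] using bpos by simp
        have "BG \<alpha> ?\<pi> w' = \<alpha> l * (cG \<alpha> u / Z) + (\<alpha> 3 + \<alpha> 4) * (cG \<alpha> (1#w') / Z + cG \<alpha> (2#w') / Z)"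
          unfolding l_def u_def by (rule BG_12[OF False L])
        also have "\<dots> = (\<alpha> l * cG \<alpha> u + ?b * (cG \<alpha> (1#w') + cG \<alpha> (2#w'))) / Z"
          using Z(2) by (simp add: betaG_def field_simps)
        also have "\<dots> = (?b * C + ?b * (\<alpha> 1 / ?b * C + \<alpha> 2 / ?b * C)) / Z"
          unfolding A1 p1 p2 ..
        also have "?b * C + ?b * (\<alpha> 1 / ?b * C + \<alpha> 2 / ?b * C) = C * (\<alpha> 1 + \<alpha> 2 + \<alpha> 3 + \<alpha> 4)"
        proof -
          have q1: "?b * (\<alpha> 1 / ?b * C) = \<alpha> 1 * C" using bpos by simp
          have q2: "?b * (\<alpha> 2 / ?b * C) = \<alpha> 2 * C" using bpos by simp
          have "?b * C + ?b * (\<alpha> 1 / ?b * C + \<alpha> 2 / ?b * C) = ?b * C + \<alpha> 1 * C + \<alpha> 2 * C"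
            unfolding distrib_left q1 q2 by simp
          thus ?thesis by (simp add: betaG_def algebra_simps)
        qed
        finally show ?thesis using F(5) by (simp add: C_def)
      qed
    next
      case (R x n)
      note x = R(1)
      let ?r = "rK \<alpha> x"
      have e: "?r * (1 - \<alpha> x) = \<alpha> x" by (rule rK_okG(3)[OF ok x])
      have "BG \<alpha> ?\<pi> w' = (\<alpha> x * ?r ^ n + (1 - \<alpha> x) * ?r ^ Suc (Suc n)) / Z"
        unfolding R(2) BG_rep[OF x s] cG_rep[OF x] by (simp add: add_divide_distrib)
      also have "\<alpha> x * ?r ^ n + (1 - \<alpha> x) * ?r ^ Suc (Suc n) = ?r ^ Suc n"
      proof -
        have "\<alpha> x * ?r ^ n = (?r * (1 - \<alpha> x)) * ?r ^ n" using e by simp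
        also have "\<dots> = (1 - \<alpha> x) * ?r ^ Suc n" by (simp add: algebra_simps)
        finally have h1: "\<alpha> x * ?r ^ n = (1 - \<alpha> x) * ?r ^ Suc n" .
        have "(1 - \<alpha> x) * ?r ^ Suc (Suc n) = (?r * (1 - \<alpha> x)) * ?r ^ Suc n" by (simp add: algebra_simps)
        also have "\<dots> = \<alpha> x * ?r ^ Suc n" using e by simp
        finally have h2: "(1 - \<alpha> x) * ?r ^ Suc (Suc n) = \<alpha> x * ?r ^ Suc n" .
        show ?thesis unfolding h1 h2 by (simp add: algebra_simps)
      qed
      finally show ?thesis unfolding R(2) cG_rep[OF x] .
    qed
  qed
  moreover have "((\<lambda>w. ?\<pi> w * fcfs_kernel E_G V4 \<alpha> w w') has_sum BG \<alpha> ?\<pi> w') UNIV"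
    by (rule G_has_BG) (rule z)
  ultimately show "((\<lambda>w. ?\<pi> w * fcfs_kernel E_G V4 \<alpha> w w') has_sum ?\<pi> w') UNIV"
    by simp
qed


lemma G_unique:
  assumes ok: "okG \<alpha>" and st: "fcfs_stationary E_G V4 \<alpha> \<mu>"
  shows "\<mu> = (\<lambda>w. \<mu> [] * cG \<alpha> w)"
proof
  fix w
  have F: "0 < \<alpha> 1" "0 < \<alpha> 2" "0 < \<alpha> 3" "0 < \<alpha> 4" "\<alpha> 1 + \<alpha> 2 + \<alpha> 3 + \<alpha> 4 = 1"
    "\<alpha> 1 + \<alpha> 2 < \<alpha> 3 + \<alpha> 4" "\<alpha> 3 < 1/2" "\<alpha> 4 < 1/2" using okG_facts[OF ok] by auto
  have s: "sum \<alpha> V4 = 1" using F by (simp add: sumV4)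
  have apos: "\<And>i. i \<in> V4 \<Longrightarrow> 0 \<le> \<alpha> i" using ok unfolding okG_def by (auto intro: less_imp_le)
  have inv: "\<not> valid E_G V4 w \<Longrightarrow> \<mu> w = 0" for w
    by (rule invalid_zero[OF st finV4 G_sym G_irr G_dom apos s])
  have rep: "\<mu> (replicate m x) = rK \<alpha> x ^ m * \<mu> []" if x: "x \<in> {3,4}" for x m
  proof -
    have a: "0 < \<alpha> x" "0 < 1 - \<alpha> x" using F x by auto
    have "\<mu> (replicate m x) = (\<alpha> x / (1 - \<alpha> x)) ^ m * \<mu> []"
    proof (rule rep_chain[OF st a])
      show "\<alpha> x + (1 - \<alpha> x) = 1" by simp
      fix m
      show "\<mu> (replicate (Suc m) x) = \<alpha> x * \<mu> (replicate m x) + (1 - \<alpha> x) * \<mu> (replicate (Suc (Suc m)) x)"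
        using G_stat_BG[OF st inv, of "replicate (Suc m) x"] BG_rep[OF x s] by simp
    qed
    thus ?thesis by (simp add: rK_def)
  qed
  have tree: "\<mu> v = cT \<alpha> (betaG \<alpha>) v * \<mu> []" if v: "set v \<subseteq> {1,2}" for v
  proof (rule tree_unique[where a=\<alpha> and b="betaG \<alpha>", OF _ _ _ _ _ _ _ _ _ v])
    show "\<And>w. 0 \<le> \<mu> w" by (rule stat_nonneg[OF st])
    show "\<And>F. finite F \<Longrightarrow> sum \<mu> F \<le> 1" by (rule stat_fin_le1[OF st])
    show "\<mu> p = \<alpha> (last p) * \<mu> (butlast p) + betaG \<alpha> * (\<mu> (1 # p) + \<mu> (2 # p))"
      if "p \<noteq> []" "set p \<subseteq> {1, 2}" for p
      using G_stat_BG[OF st inv, of p] BG_12[OF that] by (simp add: betaG_def)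
    show "0 \<le> \<alpha> 1" "0 \<le> \<alpha> 2" "\<alpha> 1 + \<alpha> 2 + betaG \<alpha> = 1" "\<alpha> 1 + \<alpha> 2 \<le> betaG \<alpha>"
      "0 < betaG \<alpha>" "betaG \<alpha> < 1" using F by (auto simp: betaG_def)
  qed
  show "\<mu> w = \<mu> [] * cG \<alpha> w"
  proof (cases "valid E_G V4 w")
    case False
    moreover hence "\<not> set w \<subseteq> {1,2}" by (auto simp: G_valid)
    ultimately show ?thesis using inv by (simp add: cG_def)
  next
    case True
    thus ?thesis
    proof (cases rule: G_cases)
      case L thus ?thesis using tree[OF L] cG_L[OF L] by simp
    next
      case (R y n)
      have "cG \<alpha> w = rK \<alpha> y ^ Suc n" unfolding R(2) by (rule cG_rep[OF R(1)])
      moreover have "\<mu> w = rK \<alpha> y ^ Suc n * \<mu> []" unfolding R(2) by (rule rep[OF R(1)])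
      ultimately show ?thesis by simp
    qed
  qed
qed

lemma cT_L2_sum: "(\<Sum>p\<in>L2 n. cT a b p) = ((a 1 + a 2) / b) ^ n"
proof (induction n)
  case 0 thus ?case by (simp add: L2_0 cT_nil)
next
  case (Suc n)
  have "(\<Sum>p\<in>L2 (Suc n). cT a b p) = (\<Sum>p\<in>L2 n. (a 1 + a 2) / b * cT a b p)"
    unfolding sum_L2_cons cT_cons by (intro sum.cong refl) (simp add: add_divide_distrib algebra_simps)
  also have "\<dots> = (a 1 + a 2) / b * (\<Sum>p\<in>L2 n. cT a b p)" by (simp add: sum_distrib_left)
  finally show ?case using Suc by simp
qed

definition rhoG :: "(nat \<Rightarrow> real) \<Rightarrow> real" where "rhoG \<alpha> = (\<alpha> 1 + \<alpha> 2) / betaG \<alpha>"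

lemma G_len_sum:
  "sum (cG \<alpha>) {w. set w \<subseteq> V4 \<and> length w = n} =
     rhoG \<alpha> ^ n + rK \<alpha> 3 ^ n + rK \<alpha> 4 ^ n + (if n = 0 then -2 else 0)"
proof (cases n)
  case 0
  have "{w. set w \<subseteq> V4 \<and> length w = n} = {[]}" using 0 by auto
  thus ?thesis using 0 by (simp add: cG_nil)
next
  case (Suc k)
  let ?L = "{w. set w \<subseteq> V4 \<and> length w = n}"
  let ?R = "{replicate n 3, replicate n (4::nat)}"
  let ?S = "L2 n \<union> ?R"
  have finL: "finite ?L" by (rule finite_lists_length_eq[OF finV4])
  have sub: "?S \<subseteq> ?L" by (auto simp: L2_def V4_def)
  have z: "\<forall>w\<in>?L - ?S. cG \<alpha> w = 0"
  proof
    fix w assume w: "w \<in> ?L - ?S"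
    show "cG \<alpha> w = 0"
    proof (cases "valid E_G V4 w")
      case False
      moreover hence "\<not> set w \<subseteq> {1,2}" by (auto simp: G_valid)
      ultimately show ?thesis by (simp add: cG_def)
    next
      case True
      thus ?thesis
      proof (cases rule: G_cases)
        case L thus ?thesis using w by (auto simp: L2_def)
      next
        case (R y m)
        have "length w = n" using w by simp
        hence "w = replicate n y" using R(2) by simp
        hence False using w R(1) by auto
        thus ?thesis ..
      qed
    qed
  qed
  have "sum (cG \<alpha>) ?L = sum (cG \<alpha>) ?S"
    by (rule sum.mono_neutral_right[OF finL sub z])
  also have "\<dots> = sum (cG \<alpha>) (L2 n) + sum (cG \<alpha>) ?R"
  proof (rule sum.union_disjoint)
    show "finite (L2 n)" by (rule finL2)
    show "finite ?R" by simp
    show "L2 n \<inter> ?R = {}" using Suc by (auto simp: L2_def simp del: replicate_Suc)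
  qed
  also have "sum (cG \<alpha>) (L2 n) = rhoG \<alpha> ^ n"
  proof -
    have "sum (cG \<alpha>) (L2 n) = (\<Sum>p\<in>L2 n. cT \<alpha> (betaG \<alpha>) p)"
      by (intro sum.cong refl cG_L) (auto simp: L2_def)
    thus ?thesis by (simp add: cT_L2_sum rhoG_def)
  qed
  also have "sum (cG \<alpha>) ?R = rK \<alpha> 3 ^ n + rK \<alpha> 4 ^ n"
  proof -
    have "replicate n (3::nat) \<noteq> replicate n 4" using Suc by simp
    thus ?thesis using cG_rep[of 3 \<alpha> n] cG_rep[of 4 \<alpha> n] by simp
  qed
  finally show ?thesis using Suc by simp
qed

definition ZG :: "(nat \<Rightarrow> real) \<Rightarrow> real" where
  "ZG \<alpha> = 1 / (1 - rhoG \<alpha>) + 1 / (1 - rK \<alpha> 3) + 1 / (1 - rK \<alpha> 4) + - 2"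

definition MG :: "(nat \<Rightarrow> real) \<Rightarrow> real" where
  "MG \<alpha> = rhoG \<alpha> / (1 - rhoG \<alpha>)^2 + rK \<alpha> 3 / (1 - rK \<alpha> 3)^2 + rK \<alpha> 4 / (1 - rK \<alpha> 4)^2"

lemma G_sums:
  assumes ok: "okG \<alpha>"
  shows "(cG \<alpha> has_sum ZG \<alpha>) UNIV" "((\<lambda>w. cG \<alpha> w * real (length w)) has_sum MG \<alpha>) UNIV"
    "0 < ZG \<alpha>"
proof -
  have F: "0 < \<alpha> 1" "0 < \<alpha> 2" "0 < \<alpha> 3" "0 < \<alpha> 4" "\<alpha> 1 + \<alpha> 2 < \<alpha> 3 + \<alpha> 4"
    using okG_facts[OF ok] by auto
  have \<rho>: "0 \<le> rhoG \<alpha>" "rhoG \<alpha> < 1" using F by (auto simp: rhoG_def betaG_def field_simps)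
  have r3: "0 \<le> rK \<alpha> 3" "rK \<alpha> 3 < 1" using rK_okG[OF ok, of 3] by auto
  have r4: "0 \<le> rK \<alpha> 4" "rK \<alpha> 4 < 1" using rK_okG[OF ok, of 4] by auto
  have zV: "\<not> set w \<subseteq> V4 \<Longrightarrow> cG \<alpha> w = 0" for w
  proof -
    assume "\<not> set w \<subseteq> V4"
    moreover hence "\<not> set w \<subseteq> {1,2}" by (auto simp: V4_def)
    ultimately show "cG \<alpha> w = 0" by (simp add: cG_def valid_def)
  qed
  show "(cG \<alpha> has_sum ZG \<alpha>) UNIV"
  proof (rule has_sum_by_length[OF finV4 cG_nonneg[OF ok] zV])
    have "((\<lambda>n. rhoG \<alpha> ^ n + rK \<alpha> 3 ^ n + rK \<alpha> 4 ^ n + (if n = 0 then -2 else 0)) has_sum ZG \<alpha>) UNIV"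
      unfolding ZG_def
      by (intro has_sum_add geom_has_sum has_sum_at0 \<rho> r3 r4)
    thus "((\<lambda>n. sum (cG \<alpha>) {w. set w \<subseteq> V4 \<and> length w = n}) has_sum ZG \<alpha>) UNIV"
      by (simp only: G_len_sum)
  qed
  show "((\<lambda>w. cG \<alpha> w * real (length w)) has_sum MG \<alpha>) UNIV"
  proof (rule has_sum_by_length[OF finV4])
    show "0 \<le> cG \<alpha> w * real (length w)" for w using cG_nonneg[OF ok] by simp
    show "\<not> set w \<subseteq> V4 \<Longrightarrow> cG \<alpha> w * real (length w) = 0" for w using zV by simp
    have e: "sum (\<lambda>w. cG \<alpha> w * real (length w)) {w. set w \<subseteq> V4 \<and> length w = n} =
             real n * rhoG \<alpha> ^ n + real n * rK \<alpha> 3 ^ n + real n * rK \<alpha> 4 ^ n" for n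
    proof -
      have "sum (\<lambda>w. cG \<alpha> w * real (length w)) {w. set w \<subseteq> V4 \<and> length w = n} =
            sum (\<lambda>w. cG \<alpha> w * real n) {w. set w \<subseteq> V4 \<and> length w = n}"
        by (rule sum.cong) auto
      also have "\<dots> = real n * (rhoG \<alpha> ^ n + rK \<alpha> 3 ^ n + rK \<alpha> 4 ^ n + (if n = 0 then -2 else 0))"
        by (simp add: sum_distrib_right[symmetric] G_len_sum)
      finally show ?thesis by (simp add: algebra_simps)
    qed
    show "((\<lambda>n. sum (\<lambda>w. cG \<alpha> w * real (length w)) {w. set w \<subseteq> V4 \<and> length w = n}) has_sum MG \<alpha>) UNIV"
      unfolding e MG_def
      by (intro has_sum_add geom_len_has_sum \<rho> r3 r4)
  qed
  have "1 \<le> 1 / (1 - rhoG \<alpha>)" "1 \<le> 1 / (1 - rK \<alpha> 3)" "1 \<le> 1 / (1 - rK \<alpha> 4)"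
    using \<rho> r3 r4 by (simp_all add: field_simps)
  thus "0 < ZG \<alpha>" unfolding ZG_def by simp
qed

lemma G_mean:
  assumes ok: "okG \<alpha>"
  shows "fcfs_mean_length E_G V4 \<alpha> = MG \<alpha> / ZG \<alpha>"
  using G_sums[OF ok]
  by (intro mean_from_product[where c="cG \<alpha>"] G_unique[OF ok] G_exists[OF ok]) auto


lemma ad: "alpha_delta d 1 = 1/4 - d" "alpha_delta d 2 = 1/4 - d" "alpha_delta d 3 = 1/2 - d"
  "alpha_delta d 4 = 3 * d"
  by (simp_all add: alpha_delta_def)

lemma ok_both:
  assumes "0 < d" "d < 1/6"
  shows "okK (alpha_delta d)" "okG (alpha_delta d)"
  using assms unfolding okK_def okG_def sumV4 ad by (auto simp: V4_def alpha_delta_def)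

theorem mainTheorem4:
  shows "((\<lambda>\<delta>. \<delta> * (fcfs_mean_length E_K4 V4 (alpha_delta \<delta>)
                      - fcfs_mean_length E_G V4 (alpha_delta \<delta>)))
          \<longlongrightarrow> 1 / 24) (at_right 0)"
proof -
  let ?F = "\<lambda>d. d * (MK (alpha_delta d) / ZK (alpha_delta d) - MG (alpha_delta d) / ZG (alpha_delta d))"
  have ev: "eventually (\<lambda>d. ?F d = d * (fcfs_mean_length E_K4 V4 (alpha_delta d)
                      - fcfs_mean_length E_G V4 (alpha_delta d))) (at_right 0)"
  proof -
    have "eventually (\<lambda>d::real. d \<in> {0<..<1/6}) (at_right 0)"
      by (rule eventually_at_right_real) simp
    thus ?thesis
    proof (rule eventually_mono)
      fix d :: real assume "d \<in> {0<..<1/6}"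
      hence d: "0 < d" "d < 1/6" by auto
      show "?F d = d * (fcfs_mean_length E_K4 V4 (alpha_delta d) - fcfs_mean_length E_G V4 (alpha_delta d))"
        using K4_mean[OF ok_both(1)[OF d]] G_mean[OF ok_both(2)[OF d]] by simp
    qed
  qed
  have "(?F \<longlongrightarrow> 1 / 24) (at_right 0)"
    unfolding MK_def ZK_def MG_def ZG_def sumV4 rK_def rhoG_def betaG_def ad
    by real_asymp
  thus ?thesis using tendsto_cong[OF ev] by blast
qed


end
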